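(* Let $M>2$, $p_M=\frac{M+2}{M-2}$, $m\ge1$, and for $p\in(1,p_M)$ let $v_p$ be the unique solution in $H^1_{0,M}$ of $-(t^{M-1}v')'=t^{M-1}|v|^{p-1}v$ on $(0,1)$, $v'(0)=0$, $v(1)=0$, with exactly $m$ nodal zones and $v_p(0)>0$, and let $f_p(r)=pr^2|v_p(r)|^{p-1}$. For $K>0$ set \[ G_{i,p}(K)=\{r\in(0,1):K\widetilde{\mathcal M}_{i-1,p}^{-1}<r<(K\widetilde{\mathcal M}_{i,p})^{-1}\}\ (i=1,\dots,m-1),\qquad G_{m,p}(K)=\{r\in(0,1):K\widetilde{\mathcal M}_{m-1,p}^{-1}<r<1\}. \] Then for every $\varepsilon>0$ there exist $\bar K=\bar K(\varepsilon)>0$ and $\bar p=\bar p(\varepsilon,\bar K)<p_M$ such that \[ \max\Big\{f_p(r): r\in\bigcup_{i=1}^m G_{i,p}(K)\Big\}<\varepsilon \] for every $K>\bar K$ and every $p\in(\bar p,p_M)$.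
   Context: $H^1_{0,M}$: measurable $v$ on $(0,1)$ with $\int_0^1t^{M-1}(v^2+|v'|^2)<\infty$, $v(1)=0$. $0=t_{0,p}<\dots<t_{m,p}=1$ are $0$ and the zeros of $v_p$, $\mathcal M_{i,p}=\max_{[t_{i,p},t_{i+1,p}]}|v_p|$, $\widetilde{\mathcal M}_{i,p}=\mathcal M_{i,p}^{(p-1)/2}$. *)

theory Defs
  imports "HOL-Analysis.Analysis"
begin

definition pM :: "real \<Rightarrow> real" where
  "pM M = (M + 2) / (M - 2)"

definition in_H10M :: "real \<Rightarrow> (real \<Rightarrow> real) \<Rightarrow> bool" where
  "in_H10M M v \<longleftrightarrow>
     (\<lambda>t. t powr (M - 1) * ((v t)\<^sup>2 + (deriv v t)\<^sup>2)) integrable_on {0..1} \<and> v 1 = 0"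

definition radial_sol :: "real \<Rightarrow> real \<Rightarrow> (real \<Rightarrow> real) \<Rightarrow> bool" where
  "radial_sol M p v \<longleftrightarrow>
     in_H10M M v \<and>
     continuous_on {0..1} v \<and>
     (\<forall>t\<in>{0<..<1}. v differentiable (at t)) \<and>
     (\<forall>t\<in>{0<..<1}. ((\<lambda>s. s powr (M - 1) * deriv v s) has_real_derivative
          (- (t powr (M - 1) * \<bar>v t\<bar> powr (p - 1) * v t))) (at t)) \<and>
     (v has_real_derivative 0) (at 0 within {0..1}) \<and>
     v 1 = 0"

definition inner_zeros :: "(real \<Rightarrow> real) \<Rightarrow> real set" where
  "inner_zeros v = {t \<in> {0<..<1}. v t = 0}"

text \<open>v has exactly m nodal zones in [0,1): exactly m-1 zeros in (0,1).\<close>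
definition nodal_zones :: "(real \<Rightarrow> real) \<Rightarrow> nat \<Rightarrow> bool" where
  "nodal_zones v m \<longleftrightarrow> finite (inner_zeros v) \<and> card (inner_zeros v) + 1 = m"

definition tz :: "(real \<Rightarrow> real) \<Rightarrow> nat \<Rightarrow> nat \<Rightarrow> real" where
  "tz v m i = (if i = 0 then 0 else if i \<ge> m then 1
               else sorted_list_of_set (inner_zeros v) ! (i - 1))"

definition Mloc :: "(real \<Rightarrow> real) \<Rightarrow> nat \<Rightarrow> nat \<Rightarrow> real" where
  "Mloc v m i = (SUP s\<in>{tz v m i .. tz v m (Suc i)}. \<bar>v s\<bar>)"

definition Mtil :: "real \<Rightarrow> (real \<Rightarrow> real) \<Rightarrow> nat \<Rightarrow> nat \<Rightarrow> real" where
  "Mtil p v m i = Mloc v m i powr ((p - 1) / 2)"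

definition Gset :: "real \<Rightarrow> (real \<Rightarrow> real) \<Rightarrow> nat \<Rightarrow> real \<Rightarrow> nat \<Rightarrow> real set" where
  "Gset p v m K i =
     (if i < m then {r \<in> {0<..<1}. K / Mtil p v m (i - 1) < r \<and> r < 1 / (K * Mtil p v m i)}
      else {r \<in> {0<..<1}. K / Mtil p v m (m - 1) < r \<and> r < 1})"

end

theory Submission
  imports Defs
begin

lemma abs_powr_split: "\<bar>x::real\<bar> powr (q+2) = \<bar>x\<bar> powr q * x\<^sup>2"
proof (cases "x = 0")
  case False
  then have "\<bar>x\<bar> powr (q+2) = \<bar>x\<bar> powr q * \<bar>x\<bar> powr 2" by (simp add: powr_add)
  also have "\<bar>x\<bar> powr 2 = x\<^sup>2" using False by (simp add: powr_numeral)
  finally show ?thesis .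
qed simp

lemma abs_powr_deriv:
  fixes q x :: real assumes q: "q > 0"
  shows "((\<lambda>x. \<bar>x\<bar> powr (q+2)) has_real_derivative ((q+2) * \<bar>x\<bar> powr q * x)) (at x)"
proof -
  consider "x = 0" | "x > 0" | "x < 0" by linarith
  then show ?thesis
  proof cases
    case 1
    have lim: "((\<lambda>h. \<bar>h\<bar> powr (q+1)) \<longlongrightarrow> 0) (at (0::real))"
    proof -
      have "((\<lambda>h. \<bar>h\<bar> powr (q+1)) \<longlongrightarrow> \<bar>0::real\<bar> powr (q+1)) (at (0::real))"
        by (intro tendsto_intros) (use q in auto)
      then show ?thesis by simp
    qed
    have "((\<lambda>h. (\<bar>0 + h\<bar> powr (q+2) - \<bar>0::real\<bar> powr (q+2)) / h) \<longlongrightarrow> 0) (at 0)"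
    proof (rule Lim_null_comparison[OF _ lim])
      have "norm ((\<bar>0 + h\<bar> powr (q+2) - \<bar>0::real\<bar> powr (q+2)) / h) \<le> \<bar>h\<bar> powr (q+1)" for h :: real
      proof (cases "h = 0")
        case False
        have "\<bar>h\<bar> powr (q+2) = \<bar>h\<bar> powr ((q+1)+1)" by (simp add: algebra_simps power2_eq_square)
        also have "\<dots> = \<bar>h\<bar> powr (q+1) * \<bar>h\<bar>" using False by (simp only: powr_add powr_one_gt_zero_iff) simp
        finally have "\<bar>h\<bar> powr (q+2) = \<bar>h\<bar> powr (q+1) * \<bar>h\<bar>" .
        then show ?thesis using False q by (simp add: abs_divide)
      qed simp
      then show "\<forall>\<^sub>F h in at 0. norm ((\<bar>0 + h\<bar> powr (q+2) - \<bar>0::real\<bar> powr (q+2)) / h) \<le> \<bar>h\<bar> powr (q+1)"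
        by (intro always_eventually) auto
    qed
    then show ?thesis using 1 q by (simp add: DERIV_def)
  next
    case 2
    have d: "((\<lambda>x. x powr (q+2)) has_real_derivative ((q+2) * x powr (q+2-1))) (at x)"
      using 2 by (rule has_real_derivative_powr)
    have e: "(q+2) * x powr (q+2-1) = (q+2) * \<bar>x\<bar> powr q * x"
      using 2 by (simp add: powr_add add.assoc)
    show ?thesis
      by (rule has_field_derivative_transform_within_open[where S="{0<..}"]) (use d[unfolded e] 2 in auto)
  next
    case 3
    have d: "((\<lambda>x. (-x) powr (q+2)) has_real_derivative ((q+2) * (-x) powr (q+2-1) * (-1))) (at x)"
      using 3 by (auto intro!: derivative_eq_intros)
    have e: "(q+2) * (-x) powr (q+2-1) * (-1) = (q+2) * \<bar>x\<bar> powr q * x"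
      using 3 by (simp add: powr_add add.assoc)
    show ?thesis
      by (rule has_field_derivative_transform_within_open[where S="{..<0}"]) (use d[unfolded e] 3 in auto)
  qed
qed

definition FE :: "real \<Rightarrow> real \<Rightarrow> real \<Rightarrow> real \<Rightarrow> real" where
  "FE b q y y' = y'\<^sup>2/2 - b*y\<^sup>2/2 + \<bar>y\<bar> powr (q+2)/(q+2)"

lemma mono_deriv_nonneg:
  fixes f :: "real \<Rightarrow> real"
  assumes mono: "\<And>s t. A \<le> s \<Longrightarrow> s \<le> t \<Longrightarrow> t \<le> P \<Longrightarrow> f s \<le> f t"
    and AP: "A < P" and x: "A \<le> x" "x \<le> P" and d: "(f has_real_derivative D) (at x)"
  shows "D \<ge> 0"
proof (rule ccontr)
  assume "\<not> D \<ge> 0" then have D: "D < 0" by simp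
  show False
  proof (cases "x < P")
    case True
    from DERIV_neg_dec_right[OF d D] obtain d where d: "d > 0" "\<And>h. h > 0 \<Longrightarrow> h < d \<Longrightarrow> f (x+h) < f x" by auto
    define h where "h = min (d/2) (P - x)"
    have "h > 0" "h < d" using d True by (auto simp: h_def)
    then have "f (x+h) < f x" using d by auto
    moreover have "f x \<le> f (x+h)" using mono[of x "x+h"] x \<open>h>0\<close> by (auto simp: h_def)
    ultimately show False by simp
  next
    case False
    then have xP: "x = P" using x by simp
    from DERIV_neg_dec_left[OF d D] obtain d where d: "d > 0" "\<And>h. h > 0 \<Longrightarrow> h < d \<Longrightarrow> f x < f (x-h)" by auto
    define h where "h = min (d/2) (P - A)"
    have "h > 0" "h < d" using d AP by (auto simp: h_def)
    then have "f x < f (x-h)" using d by auto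
    moreover have "f (x-h) \<le> f x" using mono[of "x-h" x] x xP \<open>h>0\<close> by (auto simp: h_def)
    ultimately show False by simp
  qed
qed

lemma antimono_deriv_nonpos:
  fixes f :: "real \<Rightarrow> real"
  assumes mono: "\<And>s t. A \<le> s \<Longrightarrow> s \<le> t \<Longrightarrow> t \<le> P \<Longrightarrow> f t \<le> f s"
    and AP: "A < P" and x: "A \<le> x" "x \<le> P" and d: "(f has_real_derivative D) (at x)"
  shows "D \<le> 0"
proof -
  have "-D \<ge> 0"
    by (rule mono_deriv_nonneg[where f="\<lambda>t. - f t" and A=A and P=P and x=x])
       (use mono AP x d in \<open>auto intro!: derivative_eq_intros\<close>)
  then show ?thesis by simp
qed

lemma deriv_lower_line:
  fixes f f' :: "real \<Rightarrow> real"
  assumes "A \<le> B" and "\<And>t. t \<in> {A..B} \<Longrightarrow> (f has_real_derivative f' t) (at t)"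
    and "\<And>t. t \<in> {A..B} \<Longrightarrow> f' t \<ge> c"
  shows "f B - f A \<ge> c * (B - A)"
proof -
  have "(\<lambda>t. f t - c*t) A \<le> (\<lambda>t. f t - c*t) B"
    by (rule deriv_nonneg_imp_mono[where g'="\<lambda>t. f' t - c"])
       (use assms in \<open>auto intro!: derivative_eq_intros\<close>)
  then show ?thesis by (simp add: algebra_simps)
qed

lemma deriv_upper_line:
  fixes f f' :: "real \<Rightarrow> real"
  assumes "A \<le> B" and "\<And>t. t \<in> {A..B} \<Longrightarrow> (f has_real_derivative f' t) (at t)"
    and "\<And>t. t \<in> {A..B} \<Longrightarrow> f' t \<le> c"
  shows "f B - f A \<le> c * (B - A)"
proof -
  have "(\<lambda>t. c*t - f t) A \<le> (\<lambda>t. c*t - f t) B"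
    by (rule deriv_nonneg_imp_mono[where g'="\<lambda>t. c - f' t"])
       (use assms in \<open>auto intro!: derivative_eq_intros\<close>)
  then show ?thesis by (simp add: algebra_simps)
qed

locale efo0 =
  fixes a b q :: real and y y' :: "real \<Rightarrow> real" and I :: "real set"
  assumes q_pos: "q > 0" and b_pos: "b > 0" and a_nonpos: "a \<le> 0"
    and I_open: "open I"
    and dy: "\<And>t. t \<in> I \<Longrightarrow> (y has_real_derivative y' t) (at t)"
    and dy': "\<And>t. t \<in> I \<Longrightarrow> (y' has_real_derivative (-a * y' t + b * y t - \<bar>y t\<bar> powr q * y t)) (at t)"
begin

lemma F_deriv:
  assumes t: "t \<in> I"
  shows "((\<lambda>t. FE b q (y t) (y' t)) has_real_derivative (-a * (y' t)\<^sup>2)) (at t)"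
proof -
  define Y2 where "Y2 = -a * y' t + b * y t - \<bar>y t\<bar> powr q * y t"
  have h: "((\<lambda>t. \<bar>y t\<bar> powr (q+2)) has_real_derivative ((q+2) * \<bar>y t\<bar> powr q * y t) * y' t) (at t)"
    using DERIV_chain2[OF abs_powr_deriv[OF q_pos] dy[OF t]] .
  have h2: "((\<lambda>t. \<bar>y t\<bar> powr (q+2)/(q+2)) has_real_derivative ((q+2) * \<bar>y t\<bar> powr q * y t) * y' t/(q+2)) (at t)"
    by (rule DERIV_cdivide[OF h])
  have e1: "((\<lambda>t. (y' t)\<^sup>2/2) has_real_derivative y' t * Y2) (at t)"
    using dy'[OF t] unfolding Y2_def[symmetric] by (auto intro!: derivative_eq_intros)
  have e2: "((\<lambda>t. b*(y t)\<^sup>2/2) has_real_derivative b * y t * y' t) (at t)"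
    using dy[OF t] by (auto intro!: derivative_eq_intros)
  have "((\<lambda>t. (y' t)\<^sup>2/2 - b*(y t)\<^sup>2/2 + \<bar>y t\<bar> powr (q+2)/(q+2)) has_real_derivative
     y' t * Y2 - b * y t * y' t + ((q+2) * \<bar>y t\<bar> powr q * y t) * y' t/(q+2)) (at t)"
    by (intro DERIV_add DERIV_diff e1 e2 h2)
  moreover have "y' t * Y2 - b * y t * y' t + ((q+2) * \<bar>y t\<bar> powr q * y t) * y' t/(q+2) = -a * (y' t)\<^sup>2"
    using q_pos unfolding Y2_def by (simp add: field_simps power2_eq_square)
  ultimately show ?thesis unfolding FE_def by simp
qed

lemma F_mono:
  assumes "A \<le> B" "{A..B} \<subseteq> I"
  shows "FE b q (y A) (y' A) \<le> FE b q (y B) (y' B)"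
proof (rule deriv_nonneg_imp_mono[where g="\<lambda>t. FE b q (y t) (y' t)" and g'="\<lambda>t. -a * (y' t)\<^sup>2"])
  fix x assume "x \<in> {A..B}"
  then show "((\<lambda>t. FE b q (y t) (y' t)) has_real_derivative - a * (y' x)\<^sup>2) (at x)"
    using F_deriv assms by auto
  show "0 \<le> - a * (y' x)\<^sup>2" using a_nonpos by (simp add: mult_nonpos_nonneg)
qed (use assms in auto)

lemma cont_y: "continuous_on S y" if "S \<subseteq> I" 
  using dy that by (meson DERIV_continuous continuous_at_imp_continuous_on subsetD)

lemma cont_y': "continuous_on S y'" if "S \<subseteq> I" 
  using dy' that by (meson DERIV_continuous continuous_at_imp_continuous_on subsetD)

end

locale efo = efo0 +
  assumes F_nonneg: "\<And>t. t \<in> I \<Longrightarrow> FE b q (y t) (y' t) \<ge> 0"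
begin

lemma neg: "efo a b q (\<lambda>t. - y t) (\<lambda>t. - y' t) I"
proof -
  have d1: "((\<lambda>t. - y t) has_real_derivative - y' t) (at t)" if t: "t \<in> I" for t
    using dy[OF t] by (auto intro!: derivative_eq_intros)
  have d2: "((\<lambda>t. - y' t) has_real_derivative (- a * - y' t + b * - y t - \<bar>- y t\<bar> powr q * - y t)) (at t)" if t: "t \<in> I" for t
    using dy'[OF t] by (auto intro!: derivative_eq_intros simp: algebra_simps)
  have f: "FE b q (- y t) (- y' t) \<ge> 0" if t: "t \<in> I" for t using F_nonneg[OF t] by (simp add: FE_def)
  show ?thesis
    by (unfold_locales) (use q_pos b_pos a_nonpos I_open d1 d2 f in auto)
qed

lemma crit_power:
  assumes t: "t \<in> I" and pos: "y t > 0" and z: "y' t = 0"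
  shows "y t powr q \<ge> b*(q+2)/2"
proof -
  have "FE b q (y t) (y' t) \<ge> 0" using F_nonneg[OF t] .
  then have "b * (y t)\<^sup>2/2 \<le> y t powr q * (y t)\<^sup>2/(q+2)"
    using z pos abs_powr_split[of "y t" q] by (simp add: FE_def)
  then have "b * (y t)\<^sup>2 \<le> (2 * y t powr q/(q+2)) * (y t)\<^sup>2" using q_pos by (simp add: field_simps)
  then have "b \<le> 2 * y t powr q/(q+2)" using pos by (meson mult_le_cancel_right_pos zero_less_power)
  then show ?thesis using q_pos by (simp add: field_simps)
qed

lemma no_local_min:
  assumes t: "t \<in> I" and pos: "y t > 0" and z: "y' t = 0"
  shows "\<exists>d>0. \<forall>h. 0 < h \<and> h < d \<longrightarrow> y (t+h) < y t"
proof -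
  have cp: "y t powr q \<ge> b*(q+2)/2" by (rule crit_power[OF t pos z])
  have "b*(q+2)/2 > b" using b_pos q_pos by (simp add: field_simps)
  then have "y t powr q > b" using cp by linarith
  then have neg: "-a * y' t + b * y t - \<bar>y t\<bar> powr q * y t < 0"
    using z pos by (simp add: mult_strict_right_mono algebra_simps)
  obtain d1 where d1: "d1 > 0" "\<And>h. h > 0 \<Longrightarrow> h < d1 \<Longrightarrow> y' (t+h) < y' t"
    using DERIV_neg_dec_right[OF dy'[OF t] neg] by auto
  obtain d2 where d2: "d2 > 0" "ball t d2 \<subseteq> I" using I_open t open_contains_ball by blast
  define d where "d = min d1 d2"
  have "d > 0" using d1 d2 by (simp add: d_def)
  moreover have "y (t+h) < y t" if h: "0 < h" "h < d" for h
  proof -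
    have inI: "x \<in> I" if "t \<le> x" "x \<le> t+h" for x
      using d2(2) that h by (auto simp: d_def dist_real_def)
    obtain z where zz: "t < z" "z < t+h" "y (t+h) - y t = h * y' z"
      using MVT2[of t "t+h" y y'] h dy inI by force
    have "y' z < 0" using d1(2)[of "z - t"] zz h z by (simp add: d_def)
    then have "h * y' z < 0" using mult_pos_neg[OF h(1)] by simp
    then show ?thesis using zz by simp
  qed
  ultimately show ?thesis by blast
qed

lemma qc:
  assumes AB: "{A..B} \<subseteq> I" and pos: "\<And>t. A < t \<Longrightarrow> t < B \<Longrightarrow> y t > 0"
    and st: "A \<le> s" "s \<le> t" "t \<le> u" "u \<le> B"
  shows "y t \<ge> min (y s) (y u)"
proof (rule ccontr)
  assume "\<not> ?thesis"
  then have lt: "y t < y s" "y t < y u" by auto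
  have "continuous_on {s..u} y" using AB st by (intro cont_y) auto
  then obtain c where c: "c \<in> {s..u}" "\<And>x. x \<in> {s..u} \<Longrightarrow> y c \<le> y x"
    using continuous_attains_inf[of "{s..u}" y] st by auto
  have "y c \<le> y t" using c st by auto
  then have "c \<noteq> s" "c \<noteq> u" using lt by auto
  then have cin: "s < c" "c < u" using c by auto
  have cI: "c \<in> I" using AB cin st by auto
  have cpos: "y c > 0" using pos cin st by auto
  have "y' c = 0"
  proof (rule DERIV_local_min[OF dy[OF cI]])
    show "0 < min (c - s) (u - c)" using cin by simp
    show "\<forall>x. \<bar>c - x\<bar> < min (c - s) (u - c) \<longrightarrow> y c \<le> y x"
    proof (intro allI impI)
      fix x assume "\<bar>c - x\<bar> < min (c - s) (u - c)"
      then have "x \<in> {s..u}" by (auto simp: abs_less_iff)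
      then show "y c \<le> y x" by (rule c(2))
    qed
  qed
  from no_local_min[OF cI cpos this] obtain d where d: "d > 0" "\<And>h. 0 < h \<Longrightarrow> h < d \<Longrightarrow> y (c+h) < y c" by auto
  define h where "h = min (d/2) ((u - c)/2)"
  have "0 < h" "h < d" using d cin by (auto simp: h_def)
  then have "y (c+h) < y c" using d by auto
  moreover have "c + h \<in> {s..u}" using cin \<open>0<h\<close> unfolding h_def min_def by (auto simp: field_simps)
  ultimately show False using c(2) by fastforce
qed

end

context efo begin

lemma argmax_ex:
  assumes "A \<le> B" "{A..B} \<subseteq> I"
  obtains P where "P \<in> {A..B}" "\<And>t. t \<in> {A..B} \<Longrightarrow> y t \<le> y P"
proof -
  have "continuous_on {A..B} y" using assms by (intro cont_y) auto
  then show ?thesis using continuous_attains_sup[of "{A..B}" y] assms that by auto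
qed

lemma up_down:
  assumes AB: "A \<le> B" "{A..B} \<subseteq> I" and pos: "\<And>t. A < t \<Longrightarrow> t < B \<Longrightarrow> y t > 0"
    and P: "P \<in> {A..B}" "\<And>t. t \<in> {A..B} \<Longrightarrow> y t \<le> y P"
  shows "\<And>s t. A \<le> s \<Longrightarrow> s \<le> t \<Longrightarrow> t \<le> P \<Longrightarrow> y s \<le> y t"
    and "\<And>s t. P \<le> s \<Longrightarrow> s \<le> t \<Longrightarrow> t \<le> B \<Longrightarrow> y t \<le> y s"
proof -
  fix s t assume st: "A \<le> s" "s \<le> t" "t \<le> P"
  have "y t \<ge> min (y s) (y P)" using qc[OF AB(2) pos, of s t P] st P by auto
  moreover have "y s \<le> y P" using P st by auto
  ultimately show "y s \<le> y t" by simp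
next
  fix s t assume st: "P \<le> s" "s \<le> t" "t \<le> B"
  have "y s \<ge> min (y P) (y t)" using qc[OF AB(2) pos, of P s t] st P by auto
  moreover have "y t \<le> y P" using P st by auto
  ultimately show "y t \<le> y s" by simp
qed

lemma piece_bound:
  assumes AB: "A \<le> B" "{A..B} \<subseteq> I" and pos: "\<And>t. A < t \<Longrightarrow> t < B \<Longrightarrow> y t > 0"
    and nn: "\<And>t. t \<in> {A..B} \<Longrightarrow> y t \<ge> 0" and W: "\<And>t. t \<in> {A..B} \<Longrightarrow> y t \<le> W"
    and S: "\<And>t. t \<in> {A..B} \<Longrightarrow> \<bar>y' t\<bar> \<le> S"
  shows "FE b q (y B) (y' B) - FE b q (y A) (y' A) \<le> 2*(-a)*S*W"
proof -
  let ?F = "\<lambda>t. FE b q (y t) (y' t)"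
  obtain P where P: "P \<in> {A..B}" "\<And>t. t \<in> {A..B} \<Longrightarrow> y t \<le> y P" using argmax_ex[OF AB] by blast
  note ud = up_down[OF AB pos P]
  have S0: "S \<ge> 0" using S[of A] AB by auto
  have W0: "W \<ge> 0" using W[of A] nn[of A] AB by auto
  have aS: "-a * S \<ge> 0" using S0 a_nonpos by (simp add: mult_nonpos_nonneg)
  have part1: "?F P - ?F A \<le> (-a)*S*W"
  proof (cases "A = P")
    case True then show ?thesis using aS W0 by (simp add: mult_nonpos_nonneg)
  next
    case False
    then have AP: "A < P" using P by auto
    have "(\<lambda>t. (-a)*S*y t - ?F t) A \<le> (\<lambda>t. (-a)*S*y t - ?F t) P"
    proof (rule deriv_nonneg_imp_mono[where g="\<lambda>t. (-a)*S*y t - ?F t" and g'="\<lambda>t. (-a)*S*y' t - (-a)*(y' t)\<^sup>2"])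
      fix t assume t: "t \<in> {A..P}"
      then have tI: "t \<in> I" using AB P by auto
      show "((\<lambda>t. (-a)*S*y t - ?F t) has_real_derivative (-a)*S*y' t - (-a)*(y' t)\<^sup>2) (at t)"
        by (intro DERIV_diff DERIV_cmult dy[OF tI] F_deriv[OF tI])
      have yp: "y' t \<ge> 0" using mono_deriv_nonneg[OF ud(1) AP _ _ dy[OF tI]] t by auto
      have "y' t \<le> S" using S[of t] t P by auto
      then have "(y' t)\<^sup>2 \<le> S*y' t" using yp by (simp add: power2_eq_square mult_right_mono)
      then have "(-a)*(y' t)\<^sup>2 \<le> (-a)*(S*y' t)"
        using a_nonpos by (intro mult_left_mono) auto
      then have "(-a)*(y' t)\<^sup>2 \<le> (-a)*S*y' t" by (simp add: mult.assoc)
      then show "0 \<le> (-a)*S*y' t - (-a)*(y' t)\<^sup>2" by simp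
    qed (use AP in auto)
    then have "?F P - ?F A \<le> (-a)*S*(y P - y A)" by (simp add: algebra_simps)
    also have "\<dots> \<le> (-a)*S*W"
      using W[of P] nn[of A] P AB aS by (intro mult_left_mono) auto
    finally show ?thesis .
  qed
  have part2: "?F B - ?F P \<le> (-a)*S*W"
  proof (cases "P = B")
    case True then show ?thesis using aS W0 by (simp add: mult_nonpos_nonneg)
  next
    case False
    then have PB: "P < B" using P by auto
    have "(\<lambda>t. -((-a)*S*y t) - ?F t) P \<le> (\<lambda>t. -((-a)*S*y t) - ?F t) B"
    proof (rule deriv_nonneg_imp_mono[where g="\<lambda>t. -((-a)*S*y t) - ?F t" and g'="\<lambda>t. -((-a)*S*y' t) - (-a)*(y' t)\<^sup>2"])
      fix t assume t: "t \<in> {P..B}"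
      then have tI: "t \<in> I" using AB P by auto
      show "((\<lambda>t. -((-a)*S*y t) - ?F t) has_real_derivative -((-a)*S*y' t) - (-a)*(y' t)\<^sup>2) (at t)"
        by (intro DERIV_diff DERIV_minus DERIV_cmult dy[OF tI] F_deriv[OF tI])
      have yp: "y' t \<le> 0" using antimono_deriv_nonpos[OF ud(2) PB _ _ dy[OF tI]] t by auto
      have "y' t \<ge> -S" using S[of t] t P by auto
      then have "(-a)*(y' t)\<^sup>2 \<le> (-a)*S*(- y' t)"
      proof -
        have "(- y' t) * (- y' t) \<le> S*(- y' t)" using yp \<open>y' t \<ge> -S\<close>
          by (intro mult_right_mono) auto
        then have "(y' t)\<^sup>2 \<le> S*(- y' t)" by (simp add: power2_eq_square)
        then have "(-a)*(y' t)\<^sup>2 \<le> (-a)*(S*(- y' t))" using a_nonpos by (intro mult_left_mono) auto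
        then show ?thesis by (simp add: mult.assoc)
      qed
      then show "0 \<le> -((-a)*S*y' t) - (-a)*(y' t)\<^sup>2" by simp
    qed (use PB in auto)
    then have "?F B - ?F P \<le> (-a)*S*(y P - y B)" by (simp add: algebra_simps)
    also have "\<dots> \<le> (-a)*S*W"
      using W[of P] nn[of B] P AB aS by (intro mult_left_mono) auto
    finally show ?thesis .
  qed
  show ?thesis using part1 part2 by simp
qed

end

context efo begin

lemma duration:
  assumes AB: "A \<le> B" "{A..B} \<subseteq> I" and eta: "\<eta> > 0" "\<And>t. t \<in> {A..B} \<Longrightarrow> y t \<ge> \<eta>"
    and S: "\<And>t. t \<in> {A..B} \<Longrightarrow> \<bar>y' t\<bar> \<le> S"
    and c0: "c0 > 0" "c0 \<le> \<eta>*b*q/4" "-a*S \<le> c0/2"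
    and hm: "hm > 0" "hm \<le> \<eta>\<^sup>2*b*q/(2*(q+2))"
    and YL: "(b*(1+q/4)) powr (1/q) \<le> YL"
  shows "B - A \<le> 2*(YL/sqrt hm + 1 + 4*S/c0)"
proof -
  define yL where "yL = (b*(1+q/4)) powr (1/q)"
  have bq: "b*(1+q/4) > 0" using b_pos q_pos by simp
  have yLq: "yL powr q = b*(1+q/4)" unfolding yL_def using bq q_pos by (simp add: powr_powr)
  have yL0: "yL > 0" unfolding yL_def using bq powr_gt_zero by (metis less_irrefl)
  have pos: "y t > 0" if "A < t" "t < B" for t
  proof -
    have "\<eta> \<le> y t" using eta(2) that by auto
    then show ?thesis using eta(1) by linarith
  qed
  obtain P where P: "P \<in> {A..B}" "\<And>t. t \<in> {A..B} \<Longrightarrow> y t \<le> y P" using argmax_ex[OF AB] by blast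
  note ud = up_down[OF AB pos P]
  have S0: "S \<ge> 0" using S[of A] AB by auto
  define Y2 where "Y2 t = -a * y' t + b * y t - \<bar>y t\<bar> powr q * y t" for t
  have low: "(y' t)\<^sup>2 \<ge> hm" if t: "t \<in> {A..B}" "y t < yL" for t
  proof -
    have yt: "y t \<ge> \<eta>" using eta t by auto
    have ytq: "y t powr q < b*(1+q/4)" using powr_less_mono2[OF q_pos _ t(2)] yt eta yLq by simp
    have "FE b q (y t) (y' t) \<ge> 0" using F_nonneg t AB by auto
    then have "(y' t)\<^sup>2/2 \<ge> (y t)\<^sup>2 * (b/2 - y t powr q/(q+2))"
      using abs_powr_split[of "y t" q] yt eta unfolding FE_def by (simp add: algebra_simps)
    moreover have "b/2 - y t powr q/(q+2) \<ge> b*q/(4*(q+2))"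
    proof -
      have "y t powr q/(q+2) \<le> b*(1+q/4)/(q+2)" using ytq q_pos by (simp add: divide_right_mono)
      moreover have "b/2 - b*(1+q/4)/(q+2) = b*q/(4*(q+2))" using q_pos by (simp add: field_simps)
      ultimately show ?thesis by linarith
    qed
    moreover have "(y t)\<^sup>2 \<ge> \<eta>\<^sup>2" using yt eta by (simp add: power_mono)
    ultimately have "(y' t)\<^sup>2/2 \<ge> \<eta>\<^sup>2 * (b*q/(4*(q+2)))"
      using b_pos q_pos
      by (smt (verit) mult_mono zero_le_power2 divide_nonneg_pos mult_nonneg_nonneg)
    then have "(y' t)\<^sup>2 \<ge> \<eta>\<^sup>2*b*q/(2*(q+2))" using q_pos by (simp add: field_simps)
    then show ?thesis using hm by linarith
  qed
  have high: "Y2 t \<le> -c0/2" if t: "t \<in> {A..B}" "y t \<ge> yL" for t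
  proof -
    have yt: "y t \<ge> \<eta>" using eta t by auto
    have ytq: "y t powr q \<ge> b*(1+q/4)" using powr_mono2[of q yL "y t"] q_pos yL0 t yLq by simp
    have "b - y t powr q \<le> - (b*q/4)" using ytq by (simp add: algebra_simps)
    then have "y t * (b - y t powr q) \<le> y t * (- (b*q/4))" using yt eta by (intro mult_left_mono) auto
    also have "\<dots> \<le> \<eta> * (- (b*q/4))" using yt b_pos q_pos by (intro mult_right_mono_neg) auto
    finally have e1: "b * y t - \<bar>y t\<bar> powr q * y t \<le> - (\<eta>*b*q/4)" using yt eta by (simp add: algebra_simps)
    have "-a * y' t \<le> -a * S" using S[of t] t a_nonpos by (intro mult_left_mono) auto
    then show ?thesis unfolding Y2_def using e1 c0 by linarith
  qed
  define T1 where "T1 = YL/sqrt hm + 1"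
  define T2 where "T2 = 4*S/c0"
  have yLYL: "yL \<le> YL" using YL by (simp add: yL_def)
  have sh: "sqrt hm > 0" using hm by simp
  have T1p: "T1 > 0" unfolding T1_def using yL0 yLYL sh by (simp add: add_pos_nonneg)
  have T2p: "T2 \<ge> 0" unfolding T2_def using S0 c0 by simp
  have c0T2: "c0/2 * T2 = 2*S" unfolding T2_def using c0 by (simp add: field_simps)
  have shT1: "sqrt hm * T1 = YL + sqrt hm" unfolding T1_def using sh by (simp add: field_simps)
  have d2: "\<And>t. t \<in> {A..B} \<Longrightarrow> (y' has_real_derivative Y2 t) (at t)" unfolding Y2_def using dy' AB by auto
  have d1: "\<And>t. t \<in> {A..B} \<Longrightarrow> (y has_real_derivative y' t) (at t)" using dy AB by auto
  have claim1: "P - A \<le> T1 + T2"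
  proof (rule ccontr)
    assume "\<not> ?thesis" then have lt: "P - A > T1 + T2" by simp
    define m1 where "m1 = A + T1"
    have m1: "A < m1" "m1 < P" using lt T1p T2p by (auto simp: m1_def)
    show False
    proof (cases "y m1 < yL")
      case True
      have "y m1 - y A \<ge> sqrt hm * (m1 - A)"
      proof (rule deriv_lower_line[where f'=y'])
        fix t assume t: "t \<in> {A..m1}"
        then have tAB: "t \<in> {A..B}" using m1 P by auto
        show "(y has_real_derivative y' t) (at t)" using d1[OF tAB] .
        have "y t \<le> y m1" using ud(1)[of t m1] t m1 by auto
        then have "(y' t)\<^sup>2 \<ge> hm" using low[OF tAB] True by auto
        moreover have "y' t \<ge> 0" using mono_deriv_nonneg[OF ud(1) _ _ _ d1[OF tAB]] m1 t by auto
        ultimately show "y' t \<ge> sqrt hm" using real_sqrt_le_mono[of hm "(y' t)\<^sup>2"] by simp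
      qed (use m1 in auto)
      then have "y m1 \<ge> y A + YL + sqrt hm" using shT1 by (simp add: m1_def)
      moreover have "y A \<ge> \<eta>" using eta AB by auto
      ultimately show False using True yLYL sh eta by linarith
    next
      case False
      have "y' P - y' m1 \<le> (-c0/2) * (P - m1)"
      proof (rule deriv_upper_line[where f'=Y2])
        fix t assume t: "t \<in> {m1..P}"
        then have tAB: "t \<in> {A..B}" using m1 P by auto
        show "(y' has_real_derivative Y2 t) (at t)" using d2[OF tAB] .
        have "y m1 \<le> y t" using ud(1)[of m1 t] t m1 by auto
        then show "Y2 t \<le> -c0/2" using high[OF tAB] False by auto
      qed (use m1 in auto)
      moreover have "(-c0/2) * (P - m1) < (-c0/2) * T2"
        using lt c0 by (intro mult_strict_left_mono_neg) (auto simp: m1_def)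
      moreover have "y' P - y' m1 \<ge> -2*S" using S[of P] S[of m1] P m1 by fastforce
      ultimately show False using c0T2 by linarith
    qed
  qed
  have claim2: "B - P \<le> T1 + T2"
  proof (rule ccontr)
    assume "\<not> ?thesis" then have lt: "B - P > T1 + T2" by simp
    define m2 where "m2 = B - T1"
    have m2: "P < m2" "m2 < B" "m2 - P > T2" using lt T1p T2p by (auto simp: m2_def)
    show False
    proof (cases "y m2 \<ge> yL")
      case True
      have "y' m2 - y' P \<le> (-c0/2) * (m2 - P)"
      proof (rule deriv_upper_line[where f'=Y2])
        fix t assume t: "t \<in> {P..m2}"
        then have tAB: "t \<in> {A..B}" using m2 P by auto
        show "(y' has_real_derivative Y2 t) (at t)" using d2[OF tAB] .
        have "y m2 \<le> y t" using ud(2)[of t m2] t m2 by auto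
        then show "Y2 t \<le> -c0/2" using high[OF tAB] True by auto
      qed (use m2 in auto)
      moreover have "(-c0/2) * (m2 - P) < (-c0/2) * T2"
        using m2 c0 by (intro mult_strict_left_mono_neg) auto
      moreover have "y' m2 - y' P \<ge> -2*S" using S[of P] S[of m2] P m2 by fastforce
      ultimately show False using c0T2 by linarith
    next
      case False
      have "y B - y m2 \<le> (- sqrt hm) * (B - m2)"
      proof (rule deriv_upper_line[where f'=y'])
        fix t assume t: "t \<in> {m2..B}"
        then have tAB: "t \<in> {A..B}" using m2 P by auto
        show "(y has_real_derivative y' t) (at t)" using d1[OF tAB] .
        have "y t \<le> y m2" using ud(2)[of m2 t] t m2 by auto
        then have "(y' t)\<^sup>2 \<ge> hm" using low[OF tAB] False by auto
        moreover have "y' t \<le> 0" using antimono_deriv_nonpos[OF ud(2) _ _ _ d1[OF tAB]] m2 t by auto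
        ultimately show "y' t \<le> - sqrt hm" using real_sqrt_le_mono[of hm "(y' t)\<^sup>2"] by simp
      qed (use m2 in auto)
      then have "y B \<le> y m2 - (YL + sqrt hm)" using shT1 by (simp add: m2_def)
      moreover have "y B \<ge> \<eta>" using eta AB by auto
      ultimately show False using False yLYL sh eta by linarith
    qed
  qed
  have "B - A \<le> 2*(T1+T2)" using claim1 claim2 by (auto simp: algebra_simps)
  then show ?thesis by (simp add: T1_def T2_def)
qed

end

locale nod =
  fixes v :: "real \<Rightarrow> real" and m :: nat
  assumes nz: "nodal_zones v m" and m1: "m \<ge> 1" and v1: "v 1 = 0"
    and vc: "continuous_on {0..1} v"
begin

abbreviation "t \<equiv> tz v m"
abbreviation "zs \<equiv> sorted_list_of_set (inner_zeros v)"

lemma fin: "finite (inner_zeros v)" and card_Z: "card (inner_zeros v) = m - 1"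
  using nz m1 unfolding nodal_zones_def by auto

lemma len_zs: "length zs = m - 1" using card_Z by simp
lemma set_zs: "set zs = inner_zeros v" using fin by simp
lemma zs_sorted: "sorted_wrt (<) zs" by (rule strict_sorted_list_of_set)

lemma zs_in: "k < m - 1 \<Longrightarrow> zs ! k \<in> inner_zeros v"
  using set_zs len_zs nth_mem by metis

lemma t0: "t 0 = 0" by (simp add: tz_def)
lemma tm: "i \<ge> m \<Longrightarrow> t i = 1" using m1 by (simp add: tz_def)
lemma t_mid: "1 \<le> i \<Longrightarrow> i < m \<Longrightarrow> t i = zs ! (i - 1)" by (simp add: tz_def)

lemma t_zero: "1 \<le> i \<Longrightarrow> i < m \<Longrightarrow> 0 < t i \<and> t i < 1 \<and> v (t i) = 0"
  using zs_in[of "i-1"] t_mid[of i] unfolding inner_zeros_def by auto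

lemma t_zero': "1 \<le> i \<Longrightarrow> v (t i) = 0"
  using t_zero[of i] tm[of i] v1 by (cases "i < m") auto

lemma t_range: "0 \<le> t i \<and> t i \<le> 1"
proof (cases "i = 0")
  case True then show ?thesis by (simp add: t0)
next
  case False then show ?thesis using t_zero[of i] tm[of i] by (cases "i < m") auto
qed

lemma t_pos: "i \<ge> 1 \<Longrightarrow> t i > 0"
  using t_zero[of i] tm[of i] by (cases "i < m") auto

lemma t_step: "i < m \<Longrightarrow> t i < t (Suc i)"
proof -
  assume i: "i < m"
  show ?thesis
  proof (cases "i = 0")
    case True then show ?thesis using t_pos[of 1] by (simp add: t0)
  next
    case False
    show ?thesis
    proof (cases "Suc i < m")
      case True
      have "zs ! (i - 1) < zs ! i"
        using sorted_wrt_nth_less[OF zs_sorted, of "i-1" i] True False len_zs by auto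
      then show ?thesis using t_mid[of i] t_mid[of "Suc i"] True False by auto
    next
      case False
      then show ?thesis using t_zero[of i] i \<open>i \<noteq> 0\<close> tm[of "Suc i"] by auto
    qed
  qed
qed

lemma t_le: "i \<le> j \<Longrightarrow> t i \<le> t j"
proof (induction j)
  case 0 then show ?case by simp
next
  case (Suc j)
  show ?case
  proof (cases "i = Suc j")
    case True then show ?thesis by simp
  next
    case False
    then have "t i \<le> t j" using Suc by auto
    moreover have "t j \<le> t (Suc j)"
      using t_step[of j] tm[of j] tm[of "Suc j"] by (cases "j < m") auto
    ultimately show ?thesis by simp
  qed
qed

lemma t_less_imp: "t i < t j \<Longrightarrow> i < j"
  using t_le[of j i] by (cases "j \<le> i") auto

lemma nonzero: assumes i: "i < m" and x: "t i < x" "x < t (Suc i)" shows "v x \<noteq> 0"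
proof
  assume vx: "v x = 0"
  have x01: "0 < x" "x < 1" using x t_range[of i] t_range[of "Suc i"] by auto
  then have "x \<in> inner_zeros v" using vx by (simp add: inner_zeros_def)
  then obtain k where k: "k < m - 1" "zs ! k = x" using set_zs len_zs by (metis in_set_conv_nth)
  have tk: "t (Suc k) = x" using t_mid[of "Suc k"] k by auto
  have "i < Suc k" using t_less_imp[of i "Suc k"] tk x by auto
  moreover have "Suc k < Suc i" using t_less_imp[of "Suc k" "Suc i"] tk x by auto
  ultimately show False by simp
qed

lemma locate: assumes x: "0 < x" "x < 1" shows "\<exists>j<m. t j \<le> x \<and> x \<le> t (Suc j)"
proof -
  have "\<forall>k. k \<le> m \<longrightarrow> x < t k \<longrightarrow> (\<exists>j<k. t j \<le> x \<and> x \<le> t (Suc j))"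
  proof (intro allI)
    fix k show "k \<le> m \<longrightarrow> x < t k \<longrightarrow> (\<exists>j<k. t j \<le> x \<and> x \<le> t (Suc j))"
    proof (induction k)
      case 0 then show ?case using x by (simp add: t0)
    next
      case (Suc k)
      show ?case
      proof (intro impI)
        assume "Suc k \<le> m" "x < t (Suc k)"
        show "\<exists>j<Suc k. t j \<le> x \<and> x \<le> t (Suc j)"
        proof (cases "x < t k")
          case True then show ?thesis using Suc \<open>Suc k \<le> m\<close> by (meson less_SucI Suc_leD)
        next
          case False then show ?thesis using \<open>x < t (Suc k)\<close> by (intro exI[of _ k]) auto
        qed
      qed
    qed
  qed
  then show ?thesis using x tm[of m] by auto
qed

lemma sign_const: assumes i: "i < m"
  shows "(\<forall>x. t i < x \<and> x < t (Suc i) \<longrightarrow> v x > 0) \<or> (\<forall>x. t i < x \<and> x < t (Suc i) \<longrightarrow> v x < 0)"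
proof (rule ccontr)
  assume "\<not> ?thesis"
  then obtain x y where xy: "t i < x" "x < t (Suc i)" "t i < y" "y < t (Suc i)" "v x \<le> 0" "v y \<ge> 0"
    by (meson not_le)
  have "v x \<noteq> 0" using nonzero[OF i] xy by auto
  then have vx: "v x < 0" using xy(5) by linarith
  have "v y \<noteq> 0" using nonzero[OF i] xy by auto
  then have vy: "v y > 0" using xy(6) by linarith
  have cont: "continuous_on {min x y..max x y} v"
    by (rule continuous_on_subset[OF vc]) (use t_range[of i] t_range[of "Suc i"] xy in auto)
  have "\<exists>z. min x y \<le> z \<and> z \<le> max x y \<and> v z = 0"
  proof (cases "x \<le> y")
    case True
    then show ?thesis using IVT'[of v x 0 y] cont vx vy by auto
  next
    case False
    then show ?thesis using IVT2'[of v x 0 y] cont vx vy by auto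
  qed
  then obtain z where z: "min x y \<le> z" "z \<le> max x y" "v z = 0" by blast
  have "t i < z" "z < t (Suc i)" using z xy by auto
  then show False using nonzero[OF i] z by auto
qed

lemma closed_cases: assumes i: "i < m" and x: "t i \<le> x" "x \<le> t (Suc i)" "0 < x"
  shows "v x = 0 \<or> (t i < x \<and> x < t (Suc i))"
proof (cases "x = t i")
  case True
  then have "i \<ge> 1" using x t0 by (cases i) auto
  then show ?thesis using t_zero' True by auto
next
  case False
  show ?thesis
  proof (cases "x = t (Suc i)")
    case True then show ?thesis using t_zero' by auto
  next
    case False then show ?thesis using \<open>x \<noteq> t i\<close> x by auto
  qed
qed

end

definition QM :: "real \<Rightarrow> real" where "QM M = 4/(M-2)"
definition q1 :: "real \<Rightarrow> real" where "q1 M = 8/(3*(M-2))"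
definition Bh :: "real \<Rightarrow> real" where "Bh M = (M-2)\<^sup>2/4"
definition Bl :: "real \<Rightarrow> real" where "Bl M = (M-2)\<^sup>2/8"

locale rsol =
  fixes M p :: real and m :: nat and v :: "real \<Rightarrow> real"
  assumes M2: "M > 2" and m1: "m \<ge> 1" and pq1: "p - 1 \<ge> q1 M" and ppM: "p < pM M"
    and sol: "radial_sol M p v" and nz: "nodal_zones v m" and v0: "v 0 > 0"
begin

abbreviation "q \<equiv> p - 1"
definition bet :: real where "bet = 2 / (p - 1)"
definition aa :: real where "aa = M - 2 - 2 * bet"
definition bb :: real where "bb = bet * (M - 2 - bet)"
abbreviation "v' \<equiv> deriv v"

lemma v1: "v 1 = 0" using sol by (simp add: radial_sol_def)
lemma vc: "continuous_on {0..1} v" using sol by (simp add: radial_sol_def)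

sublocale nod v m using nz m1 v1 vc by unfold_locales auto

lemma q_pos: "q > 0"
proof -
  have "q1 M > 0" using M2 by (simp add: q1_def)
  then show ?thesis using pq1 by linarith
qed

lemma q_ge: "q \<ge> q1 M" using pq1 .

lemma q_lt: "q < QM M"
  using ppM M2 by (simp add: pM_def QM_def field_simps)

lemma beta_q: "bet * q = 2"
proof -
  have "q \<noteq> 0" using q_pos by simp
  then show ?thesis unfolding bet_def by (simp only: times_divide_eq_left nonzero_mult_div_cancel_right[OF \<open>q \<noteq> 0\<close>])
qed

lemma beta_pos: "bet > 0" using q_pos by (simp add: bet_def)

lemma beta_gt: "bet > (M-2)/2"
proof -
  have "q * (M-2) < 4" using q_lt M2 q_pos by (simp add: QM_def field_simps)
  then have "(M-2)/2 * q < 2" by (simp add: field_simps)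
  then have "(M-2)/2 * q < bet * q" using beta_q by simp
  then show ?thesis using q_pos by (simp add: mult_less_cancel_right)
qed

lemma beta_le: "bet \<le> 3*(M-2)/4"
proof -
  have "q * (3*(M-2)) \<ge> 8" using pq1 M2 by (simp add: q1_def field_simps)
  then have "bet * q \<le> 3*(M-2)/4 * q" using beta_q by (simp add: field_simps)
  then show ?thesis using q_pos by (simp add: mult_le_cancel_right)
qed

lemma a_neg: "aa < 0" using beta_gt by (simp add: aa_def)

lemma b_ge: "bb \<ge> Bl M"
proof -
  have "bet * (M - 2 - bet) \<ge> ((M-2)/2) * ((M-2)/4)"
    using beta_gt beta_le M2 by (intro mult_mono) auto
  then show ?thesis by (simp add: Bl_def bb_def power2_eq_square)
qed

lemma Bl_pos: "Bl M > 0" using M2 by (simp add: Bl_def)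

lemma b_pos: "bb > 0" using b_ge Bl_pos by linarith

lemma b_le: "bb \<le> Bh M"
proof -
  have "bb = (M-2)\<^sup>2/4 - (bet - (M-2)/2)\<^sup>2" by (simp add: bb_def power2_eq_square field_simps)
  then show ?thesis by (simp add: Bh_def)
qed

lemma dv: "0 < x \<Longrightarrow> x < 1 \<Longrightarrow> (v has_real_derivative v' x) (at x)"
  using sol DERIV_deriv_iff_real_differentiable by (auto simp: radial_sol_def)

lemma dv': assumes x: "0 < x" "x < 1"
  shows "(v' has_real_derivative (-(M-1)/x * v' x - \<bar>v x\<bar> powr q * v x)) (at x)"
proof -
  let ?P = "\<lambda>s. s powr (M - 1) * v' s"
  have dP: "(?P has_real_derivative (- (x powr (M - 1) * \<bar>v x\<bar> powr (p - 1) * v x))) (at x)"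
    using sol x by (auto simp: radial_sol_def)
  have dg: "((\<lambda>s. s powr (1 - M) * ?P s) has_real_derivative
      (1 - M) * x powr (1 - M - 1) * ?P x + (- (x powr (M - 1) * \<bar>v x\<bar> powr (p - 1) * v x)) * x powr (1 - M)) (at x)"
    by (intro DERIV_mult dP has_real_derivative_powr) (use x in auto)
  have e1: "x powr (1 - M - 1) * x powr (M - 1) = 1/x"
  proof -
    have "x powr (1 - M - 1) * x powr (M - 1) = x powr ((1 - M - 1) + (M - 1))" by (simp only: powr_add)
    also have "(1 - M - 1) + (M - 1) = -1" by simp
    finally show ?thesis using x by (simp add: powr_minus_divide)
  qed
  have e2: "x powr (1 - M) * x powr (M - 1) = 1"
    using x by (simp add: powr_add[symmetric])
  have "(1 - M) * x powr (1 - M - 1) * ?P x + (- (x powr (M - 1) * \<bar>v x\<bar> powr (p - 1) * v x)) * x powr (1 - M)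
      = (1-M) * (x powr (1 - M - 1) * x powr (M - 1)) * v' x - (x powr (1 - M) * x powr (M - 1)) * \<bar>v x\<bar> powr q * v x"
    by (simp add: algebra_simps)
  also have "\<dots> = -(M-1)/x * v' x - \<bar>v x\<bar> powr q * v x" using e1 e2 by (simp add: field_simps)
  finally have eq: "(1 - M) * x powr (1 - M - 1) * ?P x + (- (x powr (M - 1) * \<bar>v x\<bar> powr (p - 1) * v x)) * x powr (1 - M)
      = -(M-1)/x * v' x - \<bar>v x\<bar> powr q * v x" .
  show ?thesis
  proof (rule has_field_derivative_transform_within_open[OF dg[unfolded eq], where S="{0<..}"])
    fix s :: real assume "s \<in> {0<..}"
    then have "s powr (1 - M) * s powr (M - 1) = 1" by (simp add: powr_add[symmetric])
    then show "s powr (1 - M) * ?P s = v' s" by (simp add: mult.assoc[symmetric])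
  qed (use x in auto)
qed

end

context rsol begin

definition w :: "real \<Rightarrow> real" where "w \<tau> = exp (bet*\<tau>) * v (exp \<tau>)"
definition w' :: "real \<Rightarrow> real" where "w' \<tau> = bet * w \<tau> + exp ((bet+1)*\<tau>) * v' (exp \<tau>)"

lemma exp_b1: "exp ((bet+1)*\<tau>) = exp (bet*\<tau>) * exp \<tau>" by (simp add: distrib_right exp_add)

lemma dw: assumes "\<tau> < 0" shows "(w has_real_derivative w' \<tau>) (at \<tau>)"
proof -
  have x: "0 < exp \<tau>" "exp \<tau> < 1" using assms by auto
  have dve: "((\<lambda>\<tau>. v (exp \<tau>)) has_real_derivative v' (exp \<tau>) * exp \<tau>) (at \<tau>)"
    by (rule DERIV_chain2[OF dv[OF x] DERIV_exp])
  have de: "((\<lambda>\<tau>. exp (bet*\<tau>)) has_real_derivative exp (bet*\<tau>) * bet) (at \<tau>)"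
    by (auto intro!: derivative_eq_intros)
  have "((\<lambda>\<tau>. exp (bet*\<tau>) * v (exp \<tau>)) has_real_derivative
         exp (bet*\<tau>) * bet * v (exp \<tau>) + v' (exp \<tau>) * exp \<tau> * exp (bet*\<tau>)) (at \<tau>)"
    by (rule DERIV_mult[OF de dve])
  moreover have "exp (bet*\<tau>) * bet * v (exp \<tau>) + v' (exp \<tau>) * exp \<tau> * exp (bet*\<tau>) = w' \<tau>"
    unfolding w'_def w_def exp_b1 by (simp add: algebra_simps)
  ultimately show ?thesis unfolding w_def[abs_def] by simp
qed

lemma absw: "\<bar>w \<tau>\<bar> = exp (bet*\<tau>) * \<bar>v (exp \<tau>)\<bar>" by (simp add: w_def abs_mult)

lemma absw_powr: "\<bar>w \<tau>\<bar> powr q = exp (2*\<tau>) * \<bar>v (exp \<tau>)\<bar> powr q"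
proof -
  have "\<bar>w \<tau>\<bar> powr q = exp (bet*\<tau>) powr q * \<bar>v (exp \<tau>)\<bar> powr q"
    unfolding absw by (simp add: powr_mult)
  also have "exp (bet*\<tau>) powr q = exp (2*\<tau>)"
    using beta_q by (simp add: exp_powr_real algebra_simps)
  finally show ?thesis .
qed

lemma dw': assumes "\<tau> < 0"
  shows "(w' has_real_derivative (-aa * w' \<tau> + bb * w \<tau> - \<bar>w \<tau>\<bar> powr q * w \<tau>)) (at \<tau>)"
proof -
  have x: "0 < exp \<tau>" "exp \<tau> < 1" using assms by auto
  define E1 where "E1 = exp ((bet+1)*\<tau>)"
  define X where "X = v' (exp \<tau>)"
  define V where "V = v (exp \<tau>)"
  define V2 where "V2 = -(M-1)/exp \<tau> * X - \<bar>V\<bar> powr q * V"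
  have d3: "((\<lambda>\<tau>. v' (exp \<tau>)) has_real_derivative V2 * exp \<tau>) (at \<tau>)"
    unfolding V2_def X_def V_def by (rule DERIV_chain2[OF dv'[OF x] DERIV_exp])
  have d2: "((\<lambda>\<tau>. exp ((bet+1)*\<tau>)) has_real_derivative E1 * (bet+1)) (at \<tau>)"
    unfolding E1_def by (auto intro!: derivative_eq_intros)
  have d1: "((\<lambda>\<tau>. bet * w \<tau>) has_real_derivative bet * w' \<tau>) (at \<tau>)"
    by (rule DERIV_cmult[OF dw[OF assms]])
  have "((\<lambda>\<tau>. bet * w \<tau> + exp ((bet+1)*\<tau>) * v' (exp \<tau>)) has_real_derivative
        bet * w' \<tau> + (E1 * (bet+1) * v' (exp \<tau>) + V2 * exp \<tau> * exp ((bet+1)*\<tau>))) (at \<tau>)"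
    by (rule DERIV_add[OF d1 DERIV_mult[OF d2 d3]])
  moreover have "bet * w' \<tau> + (E1 * (bet+1) * v' (exp \<tau>) + V2 * exp \<tau> * exp ((bet+1)*\<tau>))
       = -aa * w' \<tau> + bb * w \<tau> - \<bar>w \<tau>\<bar> powr q * w \<tau>"
  proof -
    have W: "w \<tau> = exp (bet*\<tau>) * V" by (simp add: w_def V_def)
    have hq: "\<bar>w \<tau>\<bar> powr q * w \<tau> = E1 * exp \<tau> * (\<bar>V\<bar> powr q * V)"
    proof -
      have e: "exp (2*\<tau>) * exp (bet*\<tau>) = E1 * exp \<tau>"
        unfolding E1_def exp_b1 by (simp add: exp_add[symmetric] algebra_simps)
      have A: "\<bar>w \<tau>\<bar> powr q = exp (2*\<tau>) * \<bar>V\<bar> powr q" using absw_powr by (simp add: V_def)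
      have "\<bar>w \<tau>\<bar> powr q * w \<tau> = (exp (2*\<tau>) * \<bar>V\<bar> powr q) * (exp (bet*\<tau>) * V)"
        by (subst A, subst W, rule refl)
      also have "\<dots> = (exp (2*\<tau>) * exp (bet*\<tau>)) * (\<bar>V\<bar> powr q * V)" by (simp only: mult_ac)
      finally have "\<bar>w \<tau>\<bar> powr q * w \<tau> = (exp (2*\<tau>) * exp (bet*\<tau>)) * (\<bar>V\<bar> powr q * V)" .
      then show ?thesis using e by simp
    qed
    have w'e: "w' \<tau> = bet * w \<tau> + E1 * X" by (simp add: w'_def E1_def X_def)
    have V2e: "V2 * exp \<tau> = -(M-1) * X - exp \<tau> * (\<bar>V\<bar> powr q * V)"
      unfolding V2_def using x by (simp add: field_simps)
    have "bet * w' \<tau> + (E1 * (bet+1) * v' (exp \<tau>) + V2 * exp \<tau> * exp ((bet+1)*\<tau>))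
        = bet * w' \<tau> + E1 * (bet+1) * X + E1 * (V2 * exp \<tau>)"
      by (simp add: E1_def X_def algebra_simps)
    also have "\<dots> = bet * w' \<tau> + E1 * (bet+1) * X - (M-1) * E1 * X - \<bar>w \<tau>\<bar> powr q * w \<tau>"
      unfolding V2e hq by (simp add: algebra_simps)
    also have "\<dots> = -aa * w' \<tau> + bb * w \<tau> - \<bar>w \<tau>\<bar> powr q * w \<tau>"
      unfolding w'e aa_def bb_def by (simp add: algebra_simps)
    finally show ?thesis .
  qed
  ultimately show ?thesis unfolding w'_def[abs_def] by simp
qed

lemma efo0_w: "efo0 aa bb q w w' {..<0}"
  by unfold_locales (use q_pos b_pos a_neg dw dw' in auto)

end

definition X0sq :: "real \<Rightarrow> real" where "X0sq M = (max 1 ((QM M + 2) * Bh M)) powr (2 / q1 M)"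

lemma FE_lower: "FE b q y y' \<ge> - b * y\<^sup>2/2" if "q > -2" for b q y y' :: real
  using that unfolding FE_def by (auto intro!: add_nonneg_nonneg divide_nonneg_pos)

lemma FE_y'_bound: "(y')\<^sup>2 \<le> 2*\<Phi> + b * y\<^sup>2" if "FE b q y y' \<le> \<Phi>" "q > -2" for b q y y' \<Phi> :: real
proof -
  have "\<bar>y\<bar> powr (q+2)/(q+2) \<ge> 0" using that by simp
  then show ?thesis using that unfolding FE_def by linarith
qed

lemma sq_bound:
  fixes q q1' Q b Bh' y y' \<Phi> :: real
  assumes q: "0 < q1'" "q1' \<le> q" "q \<le> Q" and b: "0 < b" "b \<le> Bh'"
    and F: "FE b q y y' \<le> \<Phi>" and Phi: "\<Phi> \<ge> 0"
  shows "y\<^sup>2 \<le> (max 1 ((Q+2)*Bh')) powr (2/q1') + 2*(Q+2)*\<Phi>"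
proof -
  define X where "X = \<bar>y\<bar>"
  define C where "C = (max 1 ((Q+2)*Bh')) powr (2/q1')"
  have q0: "q > 0" using q by linarith
  have C1: "C \<ge> 1" unfolding C_def using q by (intro ge_one_powr_ge_zero) auto
  have X0: "X \<ge> 0" by (simp add: X_def)
  have ysq: "y\<^sup>2 = X powr 2" by (simp add: X_def powr_numeral)
  have main: "X powr q * y\<^sup>2/(q+2) - b*y\<^sup>2/2 \<le> \<Phi>"
  proof -
    have "(y')\<^sup>2/2 \<ge> 0" by simp
    moreover have "\<bar>y\<bar> powr (q+2)/(q+2) = \<bar>y\<bar> powr q * y\<^sup>2/(q+2)" by (simp add: abs_powr_split)
    ultimately show ?thesis using F unfolding FE_def X_def by linarith
  qed
  consider "X \<le> 1" | "X powr q \<le> (q+2)*b" | "X > 1" "X powr q > (q+2)*b" by linarith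
  then have "y\<^sup>2 \<le> C + 2*(Q+2)*\<Phi>"
  proof cases
    case 1
    then have "y\<^sup>2 \<le> 1" using X0 unfolding ysq by (simp add: power_le_one)
    then show ?thesis using C1 Phi q by (smt (verit) mult_nonneg_nonneg)
  next
    case 2
    have "X powr 2 = (X powr q) powr (2/q)" using q0 X0 by (simp add: powr_powr)
    also have "\<dots> \<le> ((q+2)*b) powr (2/q)" using 2 q0 by (intro powr_mono2) auto
    also have "\<dots> \<le> (max 1 ((Q+2)*Bh')) powr (2/q)"
    proof (intro powr_mono2)
      have "(q+2)*b \<le> (Q+2)*Bh'" using q b by (intro mult_mono) auto
      then show "(q+2)*b \<le> max 1 ((Q+2)*Bh')" by simp
    qed (use q0 b in auto)
    also have "\<dots> \<le> C" unfolding C_def using q q0 by (intro powr_mono) (auto simp: divide_left_mono)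
    finally show ?thesis using ysq Phi q by (smt (verit) mult_nonneg_nonneg)
  next
    case 3
    have Xq1: "X powr q \<ge> 1" using 3 q0 by (intro ge_one_powr_ge_zero) auto
    have "b < X powr q/(q+2)" using 3 q0 by (simp add: field_simps)
    then have "b*y\<^sup>2/2 \<le> X powr q/(q+2) * y\<^sup>2/2" by (intro divide_right_mono mult_right_mono) auto
    moreover have "X powr q/(q+2) * y\<^sup>2/2 = (X powr q * y\<^sup>2/(q+2))/2" by simp
    ultimately have "(X powr q * y\<^sup>2/(q+2))/2 \<le> \<Phi>" using main by linarith
    moreover have "X powr q * y\<^sup>2/(2*(q+2)) = (X powr q * y\<^sup>2/(q+2))/2" by simp
    ultimately have "X powr q * y\<^sup>2/(2*(q+2)) \<le> \<Phi>" by (simp only:)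
    moreover have "y\<^sup>2/(2*(q+2)) \<le> X powr q * y\<^sup>2/(2*(q+2))"
      using Xq1 q0 by (intro divide_right_mono) (auto simp: mult_le_cancel_right1)
    ultimately have "y\<^sup>2/(2*(q+2)) \<le> \<Phi>" by linarith
    then have "y\<^sup>2 \<le> 2*(q+2)*\<Phi>" using q0 by (simp add: field_simps)
    also have "\<dots> \<le> 2*(Q+2)*\<Phi>" using q Phi by (intro mult_right_mono) auto
    finally show ?thesis using C1 by linarith
  qed
  then show ?thesis unfolding C_def .
qed

context rsol begin

lemma v_bound: obtains B where "B \<ge> 0" "\<And>x. x \<in> {0..1} \<Longrightarrow> \<bar>v x\<bar> \<le> B"
proof -
  have "continuous_on {0..1} (\<lambda>x. \<bar>v x\<bar>)" using vc by (intro continuous_intros)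
  then obtain z where "z \<in> {0..1}" "\<And>x. x \<in> {0..1} \<Longrightarrow> \<bar>v x\<bar> \<le> \<bar>v z\<bar>"
    using continuous_attains_sup[of "{0..1::real}" "\<lambda>x. \<bar>v x\<bar>"] by auto
  then show ?thesis using that[of "\<bar>v z\<bar>"] by auto
qed

lemma exp_bet_ln: "0 < x \<Longrightarrow> exp (bet * ln x) = x powr bet" by (simp add: powr_def)

lemma w_ln: "0 < x \<Longrightarrow> w (ln x) = x powr bet * v x" by (simp add: w_def exp_bet_ln)

lemma w'_ln: "0 < x \<Longrightarrow> w' (ln x) = bet * w (ln x) + x powr (bet+1) * v' x"
  by (simp add: w'_def powr_def)

lemma absw_ln_powr: "0 < x \<Longrightarrow> \<bar>w (ln x)\<bar> powr q = x\<^sup>2 * \<bar>v x\<bar> powr q"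
proof -
  assume x: "0 < x"
  have "exp (2 * ln x) = x\<^sup>2" by (simp only: mult_2 exp_add exp_ln[OF x] power2_eq_square)
  then show ?thesis using absw_powr[of "ln x"] x by simp
qed

lemma F_nonneg_w: assumes "\<tau> < 0" shows "FE bb q (w \<tau>) (w' \<tau>) \<ge> 0"
proof (rule ccontr)
  interpret E0: efo0 aa bb q w w' "{..<0}" by (rule efo0_w)
  assume "\<not> ?thesis"
  then have c: "- FE bb q (w \<tau>) (w' \<tau>) > 0" by simp
  obtain B where B: "B \<ge> 0" "\<And>x. x \<in> {0..1} \<Longrightarrow> \<bar>v x\<bar> \<le> B" using v_bound by blast
  have lim: "((\<lambda>\<xi>. bb * (\<xi> powr bet * B)\<^sup>2/2) \<longlongrightarrow> 0) (at_right 0)"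
  proof -
    have ev0: "eventually (\<lambda>x::real. 0 \<le> x) (at_right 0)"
      using eventually_at_right_less[of "0::real"] by (rule eventually_mono) auto
    have "((\<lambda>\<xi>. bb * (\<xi> powr bet * B)\<^sup>2/2) \<longlongrightarrow> bb * ((0::real) powr bet * B)\<^sup>2/2) (at_right 0)"
      by (intro tendsto_intros) (use beta_pos ev0 in auto)
    then show ?thesis by simp
  qed
  have ev1: "eventually (\<lambda>\<xi>. bb * (\<xi> powr bet * B)\<^sup>2/2 < - FE bb q (w \<tau>) (w' \<tau>)) (at_right 0)"
    using order_tendstoD(2)[OF lim c] .
  have ev2: "eventually (\<lambda>\<xi>. 0 < \<xi> \<and> \<xi> < exp \<tau>) (at_right (0::real))"
    by (rule eventually_at_rightI[of 0 "exp \<tau>"]) auto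
  obtain \<xi> where xi: "bb * (\<xi> powr bet * B)\<^sup>2/2 < - FE bb q (w \<tau>) (w' \<tau>)" "0 < \<xi>" "\<xi> < exp \<tau>"
    using eventually_happens'[OF trivial_limit_at_right_real eventually_conj[OF ev1 ev2]] by blast
  have lnx: "ln \<xi> < \<tau>" using xi by (metis ln_exp ln_less_cancel_iff exp_gt_zero)
  have f1: "FE bb q (w (ln \<xi>)) (w' (ln \<xi>)) \<le> FE bb q (w \<tau>) (w' \<tau>)"
    using lnx assms by (intro E0.F_mono) auto
  have f2: "FE bb q (w (ln \<xi>)) (w' (ln \<xi>)) \<ge> - bb * (w (ln \<xi>))\<^sup>2/2"
    using q_pos by (intro FE_lower) auto
  have f3: "(w (ln \<xi>))\<^sup>2 \<le> (\<xi> powr bet * B)\<^sup>2"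
  proof -
    have "\<xi> \<le> 1" using xi assms by (smt (verit) exp_less_one_iff)
    then have "\<bar>v \<xi>\<bar> \<le> B" using B xi by auto
    then have "\<bar>w (ln \<xi>)\<bar> \<le> \<xi> powr bet * B" using xi by (simp add: w_ln abs_mult mult_left_mono)
    then show ?thesis by (metis abs_ge_zero abs_le_square_iff abs_of_nonneg order_trans power2_abs)
  qed
  have "bb * (w (ln \<xi>))\<^sup>2 \<le> bb * (\<xi> powr bet * B)\<^sup>2" using f3 b_pos by (intro mult_left_mono) auto
  then show False using f1 f2 xi(1) by linarith
qed

lemma efo_w: "efo aa bb q w w' {..<0}"
  using efo0_w F_nonneg_w by (intro efo.intro efo_axioms.intro) auto

end

context rsol begin

definition E :: "real \<Rightarrow> real" where "E x = (v' x)\<^sup>2/2 + \<bar>v x\<bar> powr (q+2)/(q+2)"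

lemma dE: assumes x: "0 < x" "x < 1"
  shows "(E has_real_derivative (-(M-1)/x * (v' x)\<^sup>2)) (at x)"
proof -
  define V2 where "V2 = -(M-1)/x * v' x - \<bar>v x\<bar> powr q * v x"
  have h: "((\<lambda>x. \<bar>v x\<bar> powr (q+2)) has_real_derivative ((q+2) * \<bar>v x\<bar> powr q * v x) * v' x) (at x)"
    using DERIV_chain2[OF abs_powr_deriv[OF q_pos] dv[OF x]] .
  have h2: "((\<lambda>x. \<bar>v x\<bar> powr (q+2)/(q+2)) has_real_derivative ((q+2) * \<bar>v x\<bar> powr q * v x) * v' x/(q+2)) (at x)"
    by (rule DERIV_cdivide[OF h])
  have e1: "((\<lambda>x. (v' x)\<^sup>2/2) has_real_derivative v' x * V2) (at x)"
    using dv'[OF x] unfolding V2_def[symmetric] by (auto intro!: derivative_eq_intros)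
  have "((\<lambda>x. (v' x)\<^sup>2/2 + \<bar>v x\<bar> powr (q+2)/(q+2)) has_real_derivative
     v' x * V2 + ((q+2) * \<bar>v x\<bar> powr q * v x) * v' x/(q+2)) (at x)"
    by (intro DERIV_add e1 h2)
  moreover have "v' x * V2 + ((q+2) * \<bar>v x\<bar> powr q * v x) * v' x/(q+2) = -(M-1)/x * (v' x)\<^sup>2"
  proof -
    have c: "((q+2) * \<bar>v x\<bar> powr q * v x) * v' x/(q+2) = \<bar>v x\<bar> powr q * v x * v' x" using q_pos by simp
    show ?thesis unfolding c V2_def by (simp add: algebra_simps power2_eq_square)
  qed
  ultimately show ?thesis unfolding E_def[abs_def] by simp
qed

lemma E_anti: assumes "0 < x" "x \<le> y" "y < 1" shows "E y \<le> E x"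
proof -
  have "(\<lambda>x. - E x) x \<le> (\<lambda>x. - E x) y"
  proof (rule deriv_nonneg_imp_mono[where g="\<lambda>x. - E x" and g'="\<lambda>x. - (-(M-1)/x * (v' x)\<^sup>2)"])
    fix z assume z: "z \<in> {x..y}"
    then have z01: "0 < z" "z < 1" using assms by auto
    show "((\<lambda>x. - E x) has_real_derivative - (-(M-1)/z * (v' z)\<^sup>2)) (at z)"
      using DERIV_minus[OF dE[OF z01]] .
    have h: "-(M-1)/z \<le> 0" using M2 z01 by (simp add: divide_nonpos_pos)
    have "-(M-1)/z * (v' z)\<^sup>2 \<le> 0" by (rule mult_nonpos_nonneg[OF h]) simp
    then show "0 \<le> - (-(M-1)/z * (v' z)\<^sup>2)" by linarith
  qed (use assms in auto)
  then show ?thesis by simp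
qed

lemma argmax_ex: assumes "i < m"
  shows "\<exists>\<rho>. \<rho> \<in> {t i..t (Suc i)} \<and> (\<forall>x\<in>{t i..t (Suc i)}. \<bar>v x\<bar> \<le> \<bar>v \<rho>\<bar>)"
proof -
  have "continuous_on {t i..t (Suc i)} (\<lambda>x. \<bar>v x\<bar>)"
    by (intro continuous_intros continuous_on_subset[OF vc]) (use t_range[of i] t_range[of "Suc i"] in auto)
  moreover have "{t i..t (Suc i)} \<noteq> {}" using t_step[OF assms] by auto
  ultimately show ?thesis using continuous_attains_sup[of "{t i..t (Suc i)}" "\<lambda>x. \<bar>v x\<bar>"] by auto
qed

definition rho :: "nat \<Rightarrow> real" where
  "rho i = (SOME \<rho>. \<rho> \<in> {t i..t (Suc i)} \<and> (\<forall>x\<in>{t i..t (Suc i)}. \<bar>v x\<bar> \<le> \<bar>v \<rho>\<bar>))"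

lemma rho: assumes "i < m"
  shows "rho i \<in> {t i..t (Suc i)}" "\<And>x. x \<in> {t i..t (Suc i)} \<Longrightarrow> \<bar>v x\<bar> \<le> \<bar>v (rho i)\<bar>"
  using someI_ex[OF argmax_ex[OF assms]] unfolding rho_def by auto

lemma Mloc_eq: assumes "i < m" shows "Mloc v m i = \<bar>v (rho i)\<bar>"
  unfolding Mloc_def using rho[OF assms] by (intro cSup_eq_maximum) auto

lemma Mloc_pos: assumes i: "i < m" shows "Mloc v m i > 0"
proof -
  define x where "x = (t i + t (Suc i))/2"
  have x: "t i < x" "x < t (Suc i)" using t_step[OF i] by (auto simp: x_def)
  have "v x \<noteq> 0" using nonzero[OF i x] .
  moreover have "\<bar>v x\<bar> \<le> \<bar>v (rho i)\<bar>" using rho(2)[OF i, of x] x by auto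
  ultimately show ?thesis using Mloc_eq[OF i] by simp
qed

lemma rho_cases: assumes i: "i < m" shows "rho i = 0 \<or> (t i < rho i \<and> rho i < t (Suc i))"
proof -
  have r: "t i \<le> rho i" "rho i \<le> t (Suc i)" using rho(1)[OF i] by auto
  have nz: "v (rho i) \<noteq> 0" using Mloc_pos[OF i] Mloc_eq[OF i] by simp
  have "rho i \<noteq> t (Suc i)" using nz t_zero'[of "Suc i"] by auto
  moreover have "rho i = t i \<Longrightarrow> i = 0"
  proof (rule ccontr)
    assume "rho i = t i" "i \<noteq> 0"
    then show False using nz t_zero'[of i] by auto
  qed
  ultimately show ?thesis using r t0 by (cases "rho i = t i") auto
qed

lemma rho_nonneg: "i < m \<Longrightarrow> rho i \<ge> 0" using rho(1) t_range by (meson atLeastAtMost_iff order_trans)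

lemma rho_le1: "i < m \<Longrightarrow> rho i \<le> 1" using rho(1) t_range by (meson atLeastAtMost_iff order_trans)

lemma rho_deriv0: assumes i: "i < m" and pos: "rho i > 0" shows "v' (rho i) = 0"
proof -
  have r: "t i < rho i" "rho i < t (Suc i)" using rho_cases[OF i] pos by auto
  have r01: "0 < rho i" "rho i < 1" using r pos t_range[of "Suc i"] by auto
  define d where "d = min (rho i - t i) (t (Suc i) - rho i)"
  have d: "d > 0" using r by (simp add: d_def)
  have inI: "x \<in> {t i..t (Suc i)}" if "\<bar>rho i - x\<bar> < d" for x using that by (auto simp: d_def abs_less_iff)
  have inI': "t i < x \<and> x < t (Suc i)" if "\<bar>rho i - x\<bar> < d" for x using that by (auto simp: d_def abs_less_iff)
  show ?thesis
  proof (cases "v (rho i) > 0")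
    case True
    show ?thesis
    proof (rule DERIV_local_max[OF dv[OF r01] d])
      show "\<forall>y. \<bar>rho i - y\<bar> < d \<longrightarrow> v y \<le> v (rho i)"
        using rho(2)[OF i] inI True by (smt (verit))
    qed
  next
    case False
    then have neg: "v (rho i) \<le> 0" by simp
    show ?thesis
    proof (rule DERIV_local_min[OF dv[OF r01] d])
      show "\<forall>y. \<bar>rho i - y\<bar> < d \<longrightarrow> v (rho i) \<le> v y"
        using rho(2)[OF i] inI neg by (smt (verit))
    qed
  qed
qed

end

context rsol begin

lemma dv_diff: "0 < x \<Longrightarrow> x < 1 \<Longrightarrow> v differentiable (at x)"
  using sol by (auto simp: radial_sol_def)

lemma E_bound_rho0:
  assumes i: "i < m" and r0: "rho i = 0" and x: "0 < x" "x < 1"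
  shows "E x \<le> \<bar>v 0\<bar> powr (q+2)/(q+2)"
proof (rule ccontr)
  let ?C = "\<bar>v 0\<bar> powr (q+2)/(q+2)"
  assume "\<not> ?thesis"
  then have gap: "E x - ?C > 0" by simp
  define \<delta> where "\<delta> = sqrt (E x - ?C)"
  have \<delta>: "\<delta> > 0" "\<delta>\<^sup>2/2 < E x - ?C" using gap by (auto simp: \<delta>_def)
  have i0: "i = 0" using rho_cases[OF i] r0 rho(1)[OF i] t_pos[of i] by (cases i) auto
  have t1: "t (Suc 0) > 0" using t_pos[of 1] by simp
  have d0: "(v has_real_derivative 0) (at 0 within {0..1})" using sol by (simp add: radial_sol_def)
  then have "((\<lambda>y. (v y - v 0) / (y - 0)) \<longlongrightarrow> 0) (at 0 within {0..1})"
    by (simp add: has_field_derivative_iff)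
  from tendstoD[OF this \<delta>(1)] have
    "\<exists>d>0. \<forall>y\<in>{0..1}. y \<noteq> 0 \<and> dist y 0 < d \<longrightarrow> dist ((v y - v 0) / (y - 0)) 0 < \<delta>"
    unfolding eventually_at .
  then obtain d where d: "d > 0"
    "\<And>y. y \<in> {0..1} \<Longrightarrow> y \<noteq> 0 \<Longrightarrow> dist y 0 < d \<Longrightarrow> dist ((v y - v 0) / (y - 0)) 0 < \<delta>"
    by blast
  define r where "r = min d (min x (t (Suc 0))) / 2"
  have r: "0 < r" "r < d" "r < x" "r < t (Suc 0)" using d x t1 by (auto simp: r_def)
  have r1: "r < 1" using r x by simp
  have quot: "\<bar>(v r - v 0) / r\<bar> < \<delta>" using d(2)[of r] r r1 by (simp add: dist_real_def)
  have cont: "continuous_on {0..r} v" by (rule continuous_on_subset[OF vc]) (use r1 in auto)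
  have diff: "v differentiable (at y)" if "0 < y" "y < r" for y using dv_diff that r1 by auto
  obtain l z where z: "0 < z" "z < r" "(v has_real_derivative l) (at z)" "v r - v 0 = (r - 0) * l"
    using MVT[OF r(1) cont diff] by blast
  have z1: "z < 1" using z r1 by simp
  have l: "l = v' z" using DERIV_unique[OF z(3) dv[OF z(1) z1]] .
  have vz: "\<bar>v' z\<bar> < \<delta>" using quot z(4) r(1) l by simp
  have "\<bar>v z\<bar> \<le> \<bar>v (rho i)\<bar>" using rho(2)[OF i, of z] i0 z r t0 by auto
  then have "\<bar>v z\<bar> powr (q+2) \<le> \<bar>v 0\<bar> powr (q+2)" using r0 q_pos by (intro powr_mono2) auto
  then have "\<bar>v z\<bar> powr (q+2)/(q+2) \<le> ?C" using q_pos by (intro divide_right_mono) auto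
  moreover have "(v' z)\<^sup>2 \<le> \<delta>\<^sup>2" using vz by (metis abs_ge_zero less_imp_le power2_abs power_mono)
  ultimately have "E z \<le> \<delta>\<^sup>2/2 + ?C" unfolding E_def by linarith
  moreover have "E x \<le> E z" using z r x by (intro E_anti) auto
  ultimately show False using \<delta> by linarith
qed

lemma E_bound:
  assumes i: "i < m" and x: "0 < x" "x < 1" "rho i \<le> x"
  shows "E x \<le> \<bar>v (rho i)\<bar> powr (q+2)/(q+2)"
proof (cases "rho i = 0")
  case True then show ?thesis using E_bound_rho0[OF i True x(1,2)] by simp
next
  case False
  then have pos: "rho i > 0" using rho_nonneg[OF i] by simp
  have "E x \<le> E (rho i)" using pos x by (intro E_anti) auto
  also have "E (rho i) = \<bar>v (rho i)\<bar> powr (q+2)/(q+2)" unfolding E_def using rho_deriv0[OF i pos] by simp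
  finally show ?thesis .
qed

abbreviation "ML i \<equiv> Mloc v m i"
abbreviation "MT i \<equiv> Mtil p v m i"

lemma MT_eq: "MT i = ML i powr (q/2)" by (simp add: Mtil_def)

lemma MT_pos: assumes "i < m" shows "MT i > 0"
proof -
  have "ML i > 0" using Mloc_pos[OF assms] .
  then show ?thesis by (simp add: MT_eq)
qed

lemma MLMT_sq: "i < m \<Longrightarrow> (ML i * MT i)\<^sup>2 = ML i powr (q+2)"
proof -
  assume i: "i < m"
  have pos: "ML i > 0" using Mloc_pos[OF i] .
  have "(ML i * MT i)\<^sup>2 = ML i powr 2 * (ML i powr (q/2)) powr 2"
    using pos by (simp add: MT_eq power_mult_distrib powr_numeral)
  also have "(ML i powr (q/2)) powr 2 = ML i powr q"
  proof -
    have "(ML i powr (q/2)) powr 2 = ML i powr (q/2*2)" by (simp only: powr_powr)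
    also have "q/2*2 = q" by simp
    finally show ?thesis .
  qed
  also have "ML i powr 2 * ML i powr q = ML i powr (q+2)" by (simp add: powr_add[symmetric] add.commute)
  finally show ?thesis .
qed

lemma vprime_bound:
  assumes i: "i < m" and x: "0 < x" "x < 1" "rho i \<le> x"
  shows "\<bar>v' x\<bar> \<le> ML i * MT i"
proof -
  have "(v' x)\<^sup>2 \<le> 2 * E x"
  proof -
    have "\<bar>v x\<bar> powr (q+2)/(q+2) \<ge> 0" using q_pos by simp
    moreover have "2 * E x = (v' x)\<^sup>2 + 2*(\<bar>v x\<bar> powr (q+2)/(q+2))" by (simp add: E_def algebra_simps)
    ultimately show ?thesis by linarith
  qed
  also have "\<dots> \<le> 2 * (\<bar>v (rho i)\<bar> powr (q+2)/(q+2))" using E_bound[OF i x] by simp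
  also have "\<dots> \<le> \<bar>v (rho i)\<bar> powr (q+2)"
  proof -
    have "2/(q+2) \<le> 1" using q_pos by simp
    then have "2/(q+2) * \<bar>v (rho i)\<bar> powr (q+2) \<le> 1 * \<bar>v (rho i)\<bar> powr (q+2)"
      by (intro mult_right_mono) auto
    then show ?thesis by simp
  qed
  also have "\<dots> = (ML i * MT i)\<^sup>2" using MLMT_sq[OF i] Mloc_eq[OF i] by simp
  finally have "(v' x)\<^sup>2 \<le> (ML i * MT i)\<^sup>2" .
  moreover have "ML i * MT i \<ge> 0" using Mloc_pos[OF i] MT_pos[OF i] by simp
  ultimately show ?thesis using abs_le_square_iff by (metis abs_of_nonneg)
qed

lemma lower_after:
  assumes i: "i < m" and s: "rho i \<le> s" "s \<le> 1"
  shows "\<bar>v s\<bar> \<ge> ML i - (s - rho i) * (ML i * MT i)"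
proof (cases "s = rho i")
  case True then show ?thesis using Mloc_eq[OF i] by simp
next
  case False
  then have lt: "rho i < s" using s by simp
  have r0: "rho i \<ge> 0" using rho_nonneg[OF i] .
  have cont: "continuous_on {rho i..s} v" by (rule continuous_on_subset[OF vc]) (use r0 s in auto)
  have diff: "v differentiable (at y)" if "rho i < y" "y < s" for y using dv_diff that r0 s by auto
  obtain l z where z: "rho i < z" "z < s" "(v has_real_derivative l) (at z)" "v s - v (rho i) = (s - rho i) * l"
    using MVT[OF lt cont diff] by blast
  have z01: "0 < z" "z < 1" using z r0 s by auto
  have l: "l = v' z" using DERIV_unique[OF z(3) dv[OF z01]] .
  have "\<bar>l\<bar> \<le> ML i * MT i" using vprime_bound[OF i z01] z l by simp
  then have "\<bar>v s - v (rho i)\<bar> \<le> (s - rho i) * (ML i * MT i)"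
    using z(4) lt by (simp add: abs_mult mult_left_mono)
  then show ?thesis using Mloc_eq[OF i] by linarith
qed

lemma F2: assumes i: "Suc i < m" shows "t (Suc i) * MT i \<ge> 1"
proof -
  have i': "i < m" using i by simp
  have s: "rho i \<le> t (Suc i)" "t (Suc i) \<le> 1" using rho(1)[OF i'] t_range[of "Suc i"] by auto
  have "v (t (Suc i)) = 0" using t_zero'[of "Suc i"] by simp
  then have "0 \<ge> ML i - (t (Suc i) - rho i) * (ML i * MT i)" using lower_after[OF i' s] by simp
  then have "ML i * 1 \<le> ML i * ((t (Suc i) - rho i) * MT i)" by (simp add: algebra_simps)
  then have "1 \<le> (t (Suc i) - rho i) * MT i" using Mloc_pos[OF i'] by (simp add: mult_le_cancel_left_pos)
  also have "\<dots> \<le> t (Suc i) * MT i" using rho_nonneg[OF i'] MT_pos[OF i'] by (intro mult_right_mono) auto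
  finally show ?thesis .
qed

lemma F1: assumes i: "Suc i < m" shows "ML (Suc i) \<le> ML i"
proof -
  have i': "i < m" using i by simp
  have rr: "t (Suc i) \<le> rho (Suc i)" "rho (Suc i) \<le> t (Suc (Suc i))" using rho(1)[OF i] by auto
  have pos: "rho (Suc i) > 0" using rr t_pos[of "Suc i"] by simp
  have lt1: "rho (Suc i) < 1"
    using rho_cases[OF i] pos t_range[of "Suc (Suc i)"] by auto
  have ge: "rho i \<le> rho (Suc i)" using rho(1)[OF i'] rr by auto
  have "E (rho (Suc i)) = \<bar>v (rho (Suc i))\<bar> powr (q+2)/(q+2)"
    unfolding E_def using rho_deriv0[OF i pos] by simp
  then have "\<bar>v (rho (Suc i))\<bar> powr (q+2)/(q+2) \<le> \<bar>v (rho i)\<bar> powr (q+2)/(q+2)"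
    using E_bound[OF i' pos lt1 ge] by simp
  then have le: "\<bar>v (rho (Suc i))\<bar> powr (q+2) \<le> \<bar>v (rho i)\<bar> powr (q+2)"
    using q_pos by (simp add: divide_le_cancel)
  show ?thesis
  proof (rule ccontr)
    assume "\<not> ?thesis"
    then have "\<bar>v (rho i)\<bar> < \<bar>v (rho (Suc i))\<bar>" using Mloc_eq[OF i] Mloc_eq[OF i'] by simp
    then have "\<bar>v (rho i)\<bar> powr (q+2) < \<bar>v (rho (Suc i))\<bar> powr (q+2)"
      using q_pos by (intro powr_less_mono2) auto
    then show False using le by simp
  qed
qed

lemma MT_mono: assumes "i \<le> j" "j < m" shows "MT j \<le> MT i"
  using assms
proof (induction j)
  case 0 then show ?case by simp
next
  case (Suc j)
  show ?case
  proof (cases "i = Suc j")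
    case True then show ?thesis by simp
  next
    case False
    then have ij: "i \<le> j" using Suc by simp
    have "ML (Suc j) \<le> ML j" using F1 Suc by simp
    then have "MT (Suc j) \<le> MT j" unfolding MT_eq using Mloc_pos[of "Suc j"] Suc q_pos
      by (intro powr_mono2) auto
    also have "MT j \<le> MT i" using Suc ij by simp
    finally show ?thesis .
  qed
qed

end

definition c2M :: "real \<Rightarrow> real" where "c2M M = 2 + 2*(Bh M + 1)*(QM M + 2)"

context rsol begin

lemma q1_pos: "q1 M > 0" using M2 by (simp add: q1_def)
lemma QM_pos: "QM M > 0" using M2 by (simp add: QM_def)
lemma Bh_pos: "Bh M > 0" using M2 by (simp add: Bh_def)

lemma w_sq_le: assumes "FE bb q (w \<tau>) (w' \<tau>) \<le> \<Phi>" "\<Phi> \<ge> 0"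
  shows "(w \<tau>)\<^sup>2 \<le> X0sq M + 2*(QM M+2)*\<Phi>"
  using sq_bound[OF q1_pos q_ge less_imp_le[OF q_lt] b_pos b_le assms] unfolding X0sq_def .

lemma w'_sq_le: assumes "FE bb q (w \<tau>) (w' \<tau>) \<le> \<Phi>" "\<Phi> \<ge> 0"
  shows "(w' \<tau>)\<^sup>2 \<le> 2*\<Phi> + Bh M * (X0sq M + 2*(QM M+2)*\<Phi>)"
proof -
  have "(w' \<tau>)\<^sup>2 \<le> 2*\<Phi> + bb * (w \<tau>)\<^sup>2" using FE_y'_bound[OF assms(1)] q_pos by simp
  also have "bb * (w \<tau>)\<^sup>2 \<le> Bh M * (X0sq M + 2*(QM M+2)*\<Phi>)"
    using w_sq_le[OF assms] b_le b_pos by (intro mult_mono) auto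
  finally show ?thesis by simp
qed

lemma FE_neg: "FE b q (- y) (- y') = FE b q y y'" by (simp add: FE_def)

lemma piece_w:
  assumes j: "j < m" and x: "t j \<le> x1" "x1 \<le> x2" "x2 \<le> t (Suc j)" "0 < x1" "x2 < 1"
    and bd: "\<And>\<tau>. ln x1 \<le> \<tau> \<Longrightarrow> \<tau> \<le> ln x2 \<Longrightarrow> \<bar>w \<tau>\<bar> \<le> W \<and> \<bar>w' \<tau>\<bar> \<le> S"
  shows "FE bb q (w (ln x2)) (w' (ln x2)) - FE bb q (w (ln x1)) (w' (ln x1)) \<le> 2*(-aa)*S*W"
proof -
  interpret P: efo aa bb q w w' "{..<0}" by (rule efo_w)
  interpret N: efo aa bb q "\<lambda>\<tau>. - w \<tau>" "\<lambda>\<tau>. - w' \<tau>" "{..<0}" by (rule P.neg)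
  have x2p: "0 < x2" using x by simp
  have l2: "ln x2 < 0" using x x2p by simp
  have AB1: "ln x1 \<le> ln x2" using x x2p by simp
  have AB2: "{ln x1..ln x2} \<subseteq> {..<0}"
  proof
    fix \<tau> assume "\<tau> \<in> {ln x1..ln x2}"
    then have "\<tau> \<le> ln x2" by simp
    then have "\<tau> < 0" using l2 by linarith
    then show "\<tau> \<in> {..<0}" by simp
  qed
  note AB = AB1 AB2
  have ein: "t j < exp \<tau> \<and> exp \<tau> < t (Suc j)" if "ln x1 < \<tau>" "\<tau> < ln x2" for \<tau>
  proof -
    have "x1 < exp \<tau>" "exp \<tau> < x2" using that x x2p by (metis exp_ln exp_less_cancel_iff)+
    then show ?thesis using x by auto
  qed
  have ecl: "t j \<le> exp \<tau> \<and> exp \<tau> \<le> t (Suc j) \<and> 0 < exp \<tau>" if "ln x1 \<le> \<tau>" "\<tau> \<le> ln x2" for \<tau>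
  proof -
    have "x1 \<le> exp \<tau>" "exp \<tau> \<le> x2" using that x x2p by (metis exp_ln exp_le_cancel_iff)+
    then show ?thesis using x by auto
  qed
  consider "\<forall>x. t j < x \<and> x < t (Suc j) \<longrightarrow> v x > 0" | "\<forall>x. t j < x \<and> x < t (Suc j) \<longrightarrow> v x < 0"
    using sign_const[OF j] by blast
  then show ?thesis
  proof cases
    case 1
    show ?thesis
    proof (rule P.piece_bound[OF AB])
      fix \<tau> assume "ln x1 < \<tau>" "\<tau> < ln x2"
      then have "v (exp \<tau>) > 0" using 1 ein by auto
      then show "w \<tau> > 0" by (simp add: w_def)
    next
      fix \<tau> assume \<tau>: "\<tau> \<in> {ln x1..ln x2}"
      then have "v (exp \<tau>) = 0 \<or> (t j < exp \<tau> \<and> exp \<tau> < t (Suc j))" using closed_cases[OF j] ecl by auto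
      then have "v (exp \<tau>) \<ge> 0" using 1 by force
      then show "w \<tau> \<ge> 0" by (simp add: w_def)
      show "w \<tau> \<le> W" using bd[of \<tau>] \<tau> by auto
      show "\<bar>w' \<tau>\<bar> \<le> S" using bd[of \<tau>] \<tau> by auto
    qed
  next
    case 2
    have "FE bb q (- w (ln x2)) (- w' (ln x2)) - FE bb q (- w (ln x1)) (- w' (ln x1)) \<le> 2*(-aa)*S*W"
    proof (rule N.piece_bound[OF AB])
      fix \<tau> assume "ln x1 < \<tau>" "\<tau> < ln x2"
      then have "v (exp \<tau>) < 0" using 2 ein by auto
      then show "- w \<tau> > 0" by (simp add: w_def mult_pos_neg)
    next
      fix \<tau> assume \<tau>: "\<tau> \<in> {ln x1..ln x2}"
      then have "v (exp \<tau>) = 0 \<or> (t j < exp \<tau> \<and> exp \<tau> < t (Suc j))" using closed_cases[OF j] ecl by auto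
      then have "v (exp \<tau>) \<le> 0" using 2 by force
      then show "- w \<tau> \<ge> 0" by (simp add: w_def mult_nonneg_nonpos)
      show "- w \<tau> \<le> W" using bd[of \<tau>] \<tau> by auto
      show "\<bar>- w' \<tau>\<bar> \<le> S" using bd[of \<tau>] \<tau> by auto
    qed
    then show ?thesis by (simp only: FE_neg)
  qed
qed

end

context rsol begin

lemma F_start: assumes T: "T < 0"
  shows "\<exists>\<xi>0. 0 < \<xi>0 \<and> \<xi>0 < t 1 \<and> \<xi>0 < exp T \<and> FE bb q (w (ln \<xi>0)) (w' (ln \<xi>0)) \<le> 1"
proof -
  obtain B where B: "B \<ge> 0" "\<And>x. x \<in> {0..1} \<Longrightarrow> \<bar>v x\<bar> \<le> B" using v_bound by blast
  define G where "G r = ((bet+2)*B*r powr bet)\<^sup>2/2 + (B * r powr bet) powr (q+2)/(q+2)" for r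
  have ev0: "eventually (\<lambda>x::real. 0 \<le> x) (at_right 0)"
    using eventually_at_right_less[of "0::real"] by (rule eventually_mono) auto
  have "(G \<longlongrightarrow> ((bet+2)*B*(0::real) powr bet)\<^sup>2/2 + (B * (0::real) powr bet) powr (q+2)/(q+2)) (at_right 0)"
    unfolding G_def by (intro tendsto_intros) (use beta_pos ev0 q_pos B in auto)
  then have lim: "(G \<longlongrightarrow> 0) (at_right 0)" using q_pos by simp
  have t1: "t 1 > 0" using t_pos[of 1] by simp
  have ev1: "eventually (\<lambda>r. G r < 1) (at_right 0)" using order_tendstoD(2)[OF lim] by simp
  have ev2: "eventually (\<lambda>r. 0 < r \<and> r < min (t 1) (exp T)) (at_right (0::real))"
    by (rule eventually_at_rightI[of 0 "min (t 1) (exp T)"]) (use t1 in auto)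
  obtain r where r: "G r < 1" "0 < r" "r < t 1" "r < exp T"
    using eventually_happens'[OF trivial_limit_at_right_real eventually_conj[OF ev1 ev2]] by auto
  have r1: "r < 1" using r T by (smt (verit) exp_less_one_iff)
  have t11: "t 1 \<le> 1" using t_range[of 1] by simp
  have cont: "continuous_on {0..r} v" by (rule continuous_on_subset[OF vc]) (use r1 in auto)
  have diff: "v differentiable (at y)" if "0 < y" "y < r" for y using dv_diff that r1 by auto
  obtain l \<xi> where xi: "0 < \<xi>" "\<xi> < r" "(v has_real_derivative l) (at \<xi>)" "v r - v 0 = (r - 0) * l"
    using MVT[OF r(2) cont diff] by blast
  have xi1: "\<xi> < 1" using xi r1 by simp
  have l: "l = v' \<xi>" using DERIV_unique[OF xi(3) dv[OF xi(1) xi1]] .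
  have vr: "\<bar>v r\<bar> \<le> B" "\<bar>v 0\<bar> \<le> B" "\<bar>v \<xi>\<bar> \<le> B" using B r r1 xi xi1 by auto
  have "\<bar>r * v' \<xi>\<bar> \<le> 2*B" using xi(4) l vr by simp
  then have rv: "r * \<bar>v' \<xi>\<bar> \<le> 2*B" using r by (simp add: abs_mult)
  have pw: "\<xi> powr bet \<le> r powr bet" using xi beta_pos by (intro powr_mono2) auto
  have pw0: "\<xi> powr bet \<ge> 0" by simp
  have wabs: "\<bar>w (ln \<xi>)\<bar> \<le> B * r powr bet"
  proof -
    have "\<bar>w (ln \<xi>)\<bar> = \<xi> powr bet * \<bar>v \<xi>\<bar>" using xi by (simp add: w_ln abs_mult)
    also have "\<dots> \<le> r powr bet * B" using pw vr by (intro mult_mono) auto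
    finally show ?thesis by (simp add: mult.commute)
  qed
  have w'abs: "\<bar>w' (ln \<xi>)\<bar> \<le> (bet+2)*B*r powr bet"
  proof -
    have e: "\<xi> powr (bet+1) = \<xi> powr bet * \<xi>" using xi by (simp add: powr_add)
    have "\<bar>\<xi> powr (bet+1) * v' \<xi>\<bar> = \<xi> powr bet * (\<xi> * \<bar>v' \<xi>\<bar>)" using xi by (simp add: e abs_mult)
    also have "\<dots> \<le> \<xi> powr bet * (2*B)"
    proof (intro mult_left_mono)
      have "\<xi> * \<bar>v' \<xi>\<bar> \<le> r * \<bar>v' \<xi>\<bar>" using xi by (intro mult_right_mono) auto
      then show "\<xi> * \<bar>v' \<xi>\<bar> \<le> 2*B" using rv by linarith
    qed simp
    also have "\<dots> \<le> r powr bet * (2*B)" using pw B by (intro mult_right_mono) auto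
    finally have a: "\<bar>\<xi> powr (bet+1) * v' \<xi>\<bar> \<le> r powr bet * (2*B)" .
    have b: "\<bar>bet * w (ln \<xi>)\<bar> \<le> bet * (B * r powr bet)" using wabs beta_pos by (simp add: abs_mult mult_left_mono)
    have "\<bar>w' (ln \<xi>)\<bar> \<le> \<bar>bet * w (ln \<xi>)\<bar> + \<bar>\<xi> powr (bet+1) * v' \<xi>\<bar>"
      using xi by (simp add: w'_ln abs_triangle_ineq)
    also have "\<dots> \<le> (bet+2)*B*r powr bet" using a b by (simp add: algebra_simps)
    finally show ?thesis .
  qed
  have "FE bb q (w (ln \<xi>)) (w' (ln \<xi>)) \<le> (w' (ln \<xi>))\<^sup>2/2 + \<bar>w (ln \<xi>)\<bar> powr (q+2)/(q+2)"
    unfolding FE_def using b_pos by simp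
  also have "\<dots> \<le> G r"
  proof -
    have "(w' (ln \<xi>))\<^sup>2 \<le> ((bet+2)*B*r powr bet)\<^sup>2"
      using w'abs by (metis abs_ge_zero abs_le_square_iff abs_of_nonneg order_trans power2_abs)
    moreover have "\<bar>w (ln \<xi>)\<bar> powr (q+2) \<le> (B * r powr bet) powr (q+2)"
      using wabs q_pos by (intro powr_mono2) auto
    ultimately show ?thesis unfolding G_def using q_pos by (simp add: divide_right_mono add_mono)
  qed
  finally have "FE bb q (w (ln \<xi>)) (w' (ln \<xi>)) \<le> 1" using r by simp
  then show ?thesis using xi r by (intro exI[of _ \<xi>]) auto
qed

lemma F_le4:
  assumes s1: "(-aa) * m * c2M M \<le> 1/2" and s2: "(-aa) * m * (Bh M + 1) * X0sq M \<le> 1"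
    and T: "T < 0"
  shows "FE bb q (w T) (w' T) \<le> 4"
proof -
  interpret P: efo aa bb q w w' "{..<0}" by (rule efo_w)
  define \<Phi> where "\<Phi> = FE bb q (w T) (w' T)"
  have Phi0: "\<Phi> \<ge> 0" unfolding \<Phi>_def using P.F_nonneg T by auto
  have Fle: "FE bb q (w \<tau>) (w' \<tau>) \<le> \<Phi>" if "\<tau> \<le> T" for \<tau>
    unfolding \<Phi>_def using that T by (intro P.F_mono) auto
  define Wsq where "Wsq = X0sq M + 2*(QM M+2)*\<Phi>"
  define Ssq where "Ssq = 2*\<Phi> + Bh M * Wsq"
  have X0: "X0sq M \<ge> 1" unfolding X0sq_def using q1_pos by (intro ge_one_powr_ge_zero) auto
  have Wsq0: "Wsq \<ge> 0" unfolding Wsq_def using X0 Phi0 QM_pos by simp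
  have Ssq0: "Ssq \<ge> 0" unfolding Ssq_def using Wsq0 Phi0 Bh_pos by simp
  define W where "W = sqrt Wsq"
  define S where "S = sqrt Ssq"
  have bd: "\<bar>w \<tau>\<bar> \<le> W \<and> \<bar>w' \<tau>\<bar> \<le> S" if "\<tau> \<le> T" for \<tau>
  proof -
    have "(w \<tau>)\<^sup>2 \<le> Wsq" unfolding Wsq_def using w_sq_le[OF Fle[OF that] Phi0] .
    then have a: "\<bar>w \<tau>\<bar> \<le> W" unfolding W_def using real_sqrt_le_mono by fastforce
    have "(w' \<tau>)\<^sup>2 \<le> Ssq" unfolding Ssq_def Wsq_def using w'_sq_le[OF Fle[OF that] Phi0] .
    then have "\<bar>w' \<tau>\<bar> \<le> S" unfolding S_def using real_sqrt_le_mono by fastforce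
    then show ?thesis using a by simp
  qed
  obtain \<xi>0 where x0: "0 < \<xi>0" "\<xi>0 < t 1" "\<xi>0 < exp T" "FE bb q (w (ln \<xi>0)) (w' (ln \<xi>0)) \<le> 1"
    using F_start[OF T] by blast
  have S0: "S \<ge> 0" "W \<ge> 0" using Ssq0 Wsq0 by (auto simp: S_def W_def)
  have aSW: "(-aa)*S*W \<ge> 0" using a_neg S0 by (intro mult_nonneg_nonneg) auto
  have claim: "\<forall>x. \<xi>0 \<le> x \<longrightarrow> x \<le> exp T \<longrightarrow> x \<le> t (Suc j) \<longrightarrow>
      FE bb q (w (ln x)) (w' (ln x)) \<le> FE bb q (w (ln \<xi>0)) (w' (ln \<xi>0)) + 2*(real j+1)*((-aa)*S*W)"
    if "j < m" for j
    using that
  proof (induction j)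
    case 0
    show ?case
    proof (intro allI impI)
      fix x assume x: "\<xi>0 \<le> x" "x \<le> exp T" "x \<le> t (Suc 0)"
      have x1: "x < 1" using x T by (smt (verit) exp_less_one_iff)
      have "FE bb q (w (ln x)) (w' (ln x)) - FE bb q (w (ln \<xi>0)) (w' (ln \<xi>0)) \<le> 2*(-aa)*S*W"
      proof (rule piece_w[OF 0])
        show "t 0 \<le> \<xi>0" using x0 t0 by simp
        fix \<tau> assume "\<tau> \<le> ln x"
        moreover have "ln x \<le> T" using x x0 by (metis exp_le_cancel_iff exp_ln less_le_trans)
        ultimately show "\<bar>w \<tau>\<bar> \<le> W \<and> \<bar>w' \<tau>\<bar> \<le> S" using bd by auto
      qed (use x x0 x1 in auto)
      then show "FE bb q (w (ln x)) (w' (ln x)) \<le> FE bb q (w (ln \<xi>0)) (w' (ln \<xi>0)) + 2*(real 0+1)*((-aa)*S*W)"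
        by (simp add: algebra_simps)
    qed
  next
    case (Suc j)
    have jm: "j < m" using Suc by simp
    show ?case
    proof (intro allI impI)
      fix x assume x: "\<xi>0 \<le> x" "x \<le> exp T" "x \<le> t (Suc (Suc j))"
      have x1: "x < 1" using x T by (smt (verit) exp_less_one_iff)
      show "FE bb q (w (ln x)) (w' (ln x)) \<le> FE bb q (w (ln \<xi>0)) (w' (ln \<xi>0)) + 2*(real (Suc j)+1)*((-aa)*S*W)"
      proof (cases "x \<le> t (Suc j)")
        case True
        then have "FE bb q (w (ln x)) (w' (ln x)) \<le> FE bb q (w (ln \<xi>0)) (w' (ln \<xi>0)) + 2*(real j+1)*((-aa)*S*W)"
          using Suc.IH[OF jm] x by auto
        also have "\<dots> \<le> FE bb q (w (ln \<xi>0)) (w' (ln \<xi>0)) + 2*(real (Suc j)+1)*((-aa)*S*W)"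
          using aSW by (intro add_left_mono mult_right_mono) auto
        finally show ?thesis .
      next
        case False
        have tS: "t 1 \<le> t (Suc j)" using t_le[of 1 "Suc j"] by simp
        have tp: "t (Suc j) > 0" using t_pos[of "Suc j"] by simp
        have ih: "FE bb q (w (ln (t (Suc j)))) (w' (ln (t (Suc j)))) \<le> FE bb q (w (ln \<xi>0)) (w' (ln \<xi>0)) + 2*(real j+1)*((-aa)*S*W)"
          using Suc.IH[OF jm] x0 tS False x by auto
        have "FE bb q (w (ln x)) (w' (ln x)) - FE bb q (w (ln (t (Suc j)))) (w' (ln (t (Suc j)))) \<le> 2*(-aa)*S*W"
        proof (rule piece_w[OF Suc.prems])
          fix \<tau> assume "\<tau> \<le> ln x"
          moreover have "ln x \<le> T" using x x0 by (metis exp_le_cancel_iff exp_ln less_le_trans)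
          ultimately show "\<bar>w \<tau>\<bar> \<le> W \<and> \<bar>w' \<tau>\<bar> \<le> S" using bd by auto
        qed (use x x1 False tp in auto)
        then show ?thesis using ih by (simp add: algebra_simps)
      qed
    qed
  qed
  have mpos: "m - 1 < m" using m1 by simp
  have tmm: "t (Suc (m-1)) = 1" using tm m1 by simp
  have "exp T \<le> t (Suc (m-1))" using T tmm by simp
  then have "FE bb q (w (ln (exp T))) (w' (ln (exp T))) \<le> FE bb q (w (ln \<xi>0)) (w' (ln \<xi>0)) + 2*(real (m-1)+1)*((-aa)*S*W)"
    using claim[OF mpos, rule_format, of "exp T"] x0 by (simp add: less_imp_le)
  then have ineq: "\<Phi> \<le> 1 + 2*real m*((-aa)*S*W)" using x0 m1 unfolding \<Phi>_def by (simp add: of_nat_diff)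
  have "2*S*W \<le> Ssq + Wsq"
  proof -
    have "(S - W)\<^sup>2 \<ge> 0" by simp
    moreover have "S\<^sup>2 = Ssq" "W\<^sup>2 = Wsq" using Ssq0 Wsq0 by (auto simp: S_def W_def)
    ultimately show ?thesis by (simp add: power2_eq_square algebra_simps)
  qed
  moreover have "Ssq + Wsq = (Bh M + 1) * X0sq M + c2M M * \<Phi>"
    unfolding Ssq_def Wsq_def c2M_def by (simp add: algebra_simps)
  ultimately have "2*S*W \<le> (Bh M + 1) * X0sq M + c2M M * \<Phi>" by simp
  then have "real m * (-aa) * (2*S*W) \<le> real m * (-aa) * ((Bh M + 1) * X0sq M + c2M M * \<Phi>)"
    using a_neg by (intro mult_left_mono) (auto simp: mult_nonneg_nonpos)
  then have "\<Phi> \<le> 1 + (-aa) * m * (Bh M + 1) * X0sq M + ((-aa) * m * c2M M) * \<Phi>"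
    using ineq by (simp add: algebra_simps)
  moreover have "((-aa) * m * c2M M) * \<Phi> \<le> 1/2 * \<Phi>" using s1 Phi0 by (intro mult_right_mono) auto
  ultimately show ?thesis using s2 unfolding \<Phi>_def by linarith
qed

end

definition S0 :: "real \<Rightarrow> real" where "S0 M = sqrt (8 + Bh M * (X0sq M + 8*(QM M + 2)))"
definition Ca :: "real \<Rightarrow> real" where "Ca M = max 1 (4*(QM M + 2))"
definition eta2 :: "real \<Rightarrow> real \<Rightarrow> real" where
  "eta2 M \<gamma> = min (\<gamma> powr (1 / q1 M)) ((1/2) powr (2 / q1 M) / 2)"
definition YL0 :: "real \<Rightarrow> real" where "YL0 M = (max 1 (Bh M * (1 + QM M/4))) powr (1 / q1 M)"
definition hmL :: "real \<Rightarrow> real \<Rightarrow> real" where "hmL M \<gamma> = (eta2 M \<gamma>)\<^sup>2 * Bl M * q1 M / (2*(QM M + 2))"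
definition c0L :: "real \<Rightarrow> real \<Rightarrow> real" where "c0L M \<gamma> = eta2 M \<gamma> * Bl M * q1 M / 4"
definition Tdur :: "real \<Rightarrow> real \<Rightarrow> real" where
  "Tdur M \<gamma> = 2*(YL0 M / sqrt (hmL M \<gamma>) + 1 + 4 * S0 M / c0L M \<gamma>)"
definition Kreq :: "real \<Rightarrow> real \<Rightarrow> real" where
  "Kreq M \<gamma> = max (Ca M + 1) ((Ca M + 1/2) * exp (Tdur M \<gamma>) + 1)"

context rsol begin

lemma eta2_pos: "\<gamma> > 0 \<Longrightarrow> eta2 M \<gamma> > 0" by (simp add: eta2_def)

lemma w'_le_S0:
  assumes s1: "(-aa) * m * c2M M \<le> 1/2" and s2: "(-aa) * m * (Bh M + 1) * X0sq M \<le> 1" and T: "\<tau> < 0"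
  shows "\<bar>w' \<tau>\<bar> \<le> S0 M"
proof -
  have F: "FE bb q (w \<tau>) (w' \<tau>) \<le> 4" by (rule F_le4[OF s1 s2 T])
  have "(w' \<tau>)\<^sup>2 \<le> 2*4 + Bh M * (X0sq M + 2*(QM M+2)*4)" by (rule w'_sq_le[OF F]) simp
  also have "\<dots> = 8 + Bh M * (X0sq M + 8*(QM M + 2))" by simp
  finally have "sqrt ((w' \<tau>)\<^sup>2) \<le> S0 M" unfolding S0_def by (rule real_sqrt_le_mono)
  then show ?thesis by simp
qed

lemma abs_w_rho:
  assumes j: "j < m" and pos: "rho j > 0"
  shows "\<bar>w (ln (rho j))\<bar> powr (q/2) = rho j * MT j"
proof -
  have e: "\<bar>w (ln (rho j))\<bar> = rho j powr bet * ML j" using pos Mloc_eq[OF j] by (simp add: w_ln abs_mult)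
  have "(rho j powr bet * ML j) powr (q/2) = (rho j powr bet) powr (q/2) * ML j powr (q/2)"
    using pos Mloc_pos[OF j] by (intro powr_mult; auto)
  also have "(rho j powr bet) powr (q/2) = rho j"
  proof -
    have "(rho j powr bet) powr (q/2) = rho j powr (bet * (q/2))" by (simp add: powr_powr)
    also have "bet * (q/2) = 1" using beta_q by simp
    finally show ?thesis using pos by simp
  qed
  finally show ?thesis unfolding e MT_eq .
qed

lemma rho_MT_le:
  assumes s1: "(-aa) * m * c2M M \<le> 1/2" and s2: "(-aa) * m * (Bh M + 1) * X0sq M \<le> 1" and j: "j < m"
  shows "rho j * MT j \<le> Ca M"
proof (cases "rho j = 0")
  case True then show ?thesis by (simp add: Ca_def)
next
  case False
  then have pos: "rho j > 0" using rho_nonneg[OF j] by simp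
  have lt1: "rho j < 1" using rho_cases[OF j] pos t_range[of "Suc j"] by auto
  define \<sigma> where "\<sigma> = ln (rho j)"
  have s0: "\<sigma> < 0" using pos lt1 by (simp add: \<sigma>_def)
  have F: "FE bb q (w \<sigma>) (w' \<sigma>) \<le> 4" by (rule F_le4[OF s1 s2 s0])
  have w'e: "w' \<sigma> = bet * w \<sigma>" using w'_ln[OF pos] rho_deriv0[OF j pos] by (simp add: \<sigma>_def)
  have bb_le: "bb \<le> bet\<^sup>2"
  proof -
    have "bet\<^sup>2 - bb = bet * (2*bet - (M-2))" by (simp add: bb_def power2_eq_square algebra_simps)
    also have "\<dots> \<ge> 0" using beta_pos beta_gt by (intro mult_nonneg_nonneg) auto
    finally show ?thesis by simp
  qed
  have "FE bb q (w \<sigma>) (w' \<sigma>) = (bet\<^sup>2 - bb) * (w \<sigma>)\<^sup>2/2 + \<bar>w \<sigma>\<bar> powr (q+2)/(q+2)"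
    unfolding FE_def w'e by (simp add: power_mult_distrib left_diff_distrib diff_divide_distrib)
  moreover have "(bet\<^sup>2 - bb) * (w \<sigma>)\<^sup>2/2 \<ge> 0" using bb_le by simp
  ultimately have "\<bar>w \<sigma>\<bar> powr (q+2)/(q+2) \<le> 4" using F by linarith
  then have A: "\<bar>w \<sigma>\<bar> powr (q+2) \<le> 4*(q+2)" using q_pos by (simp add: divide_le_eq)
  have "\<bar>w \<sigma>\<bar> powr (q/2) \<le> Ca M"
  proof (cases "\<bar>w \<sigma>\<bar> \<le> 1")
    case True
    then have "\<bar>w \<sigma>\<bar> powr (q/2) \<le> 1" using q_pos powr_mono2[of "q/2" "\<bar>w \<sigma>\<bar>" 1] by simp
    then show ?thesis by (simp add: Ca_def)
  next
    case False
    then have "\<bar>w \<sigma>\<bar> powr (q/2) \<le> \<bar>w \<sigma>\<bar> powr (q+2)" using q_pos by (intro powr_mono) auto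
    also have "\<dots> \<le> 4*(q+2)" by (rule A)
    also have "\<dots> \<le> 4*(QM M + 2)" using q_lt by simp
    finally show ?thesis by (simp add: Ca_def)
  qed
  then show ?thesis using abs_w_rho[OF j pos] by (simp add: \<sigma>_def)
qed

end

context rsol begin

lemma YL_bound: "(bb*(1+q/4)) powr (1/q) \<le> YL0 M"
proof -
  have "bb*(1+q/4) \<le> Bh M * (1 + QM M/4)" using b_le b_pos q_lt q_pos by (intro mult_mono) auto
  then have "(bb*(1+q/4)) powr (1/q) \<le> (max 1 (Bh M * (1 + QM M/4))) powr (1/q)"
    using b_pos q_pos by (intro powr_mono2) auto
  also have "\<dots> \<le> (max 1 (Bh M * (1 + QM M/4))) powr (1/q1 M)"
    using q_ge q1_pos by (intro powr_mono) (auto simp: divide_left_mono)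
  finally show ?thesis by (simp add: YL0_def)
qed

lemma coreB:
  assumes s1: "(-aa) * m * c2M M \<le> 1/2" and s2: "(-aa) * m * (Bh M + 1) * X0sq M \<le> 1"
    and s3: "(-aa) * S0 M \<le> c0L M \<gamma> / 2" and \<gamma>: "0 < \<gamma>" "\<gamma> \<le> 1"
    and j: "j < m" and r: "t j < r" "r < t (Suc j)" and K: "K \<ge> Kreq M \<gamma>" and big: "r * MT j > K"
  shows "r\<^sup>2 * \<bar>v r\<bar> powr q < \<gamma>"
proof (rule ccontr)
  assume "\<not> ?thesis"
  then have g: "r\<^sup>2 * \<bar>v r\<bar> powr q \<ge> \<gamma>" by simp
  have r01: "0 < r" "r < 1" using r t_range[of j] t_range[of "Suc j"] by auto
  have Ca1: "Ca M \<ge> 1" by (simp add: Ca_def)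
  have KC: "K \<ge> Ca M + 1" using K by (simp add: Kreq_def)
  have MTp: "MT j > 0" using MT_pos[OF j] .
  have MLp: "ML j > 0" using Mloc_pos[OF j] .
  have rhoMT: "rho j * MT j \<le> Ca M" by (rule rho_MT_le[OF s1 s2 j])
  have rgt: "rho j < r"
  proof (rule ccontr)
    assume "\<not> rho j < r"
    then have "r * MT j \<le> rho j * MT j" using MTp by (intro mult_right_mono) auto
    then show False using rhoMT big KC by linarith
  qed
  have r0: "rho j \<ge> t j" using rho(1)[OF j] by simp
  define f where "f s = (s - rho j) * MT j" for s
  have fc: "continuous_on {rho j..r} f" unfolding f_def by (intro continuous_intros)
  have fr: "f r \<ge> 1/2" unfolding f_def using big rhoMT KC Ca1 by (simp add: algebra_simps)
  obtain s where s: "rho j \<le> s" "s \<le> r" "f s = 1/2"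
    using IVT'[of f "rho j" "1/2" r] fc fr rgt by (auto simp: f_def)
  have sgt: "s > rho j" using s(3) unfolding f_def using s(1) by (cases "s = rho j") auto
  have s0: "s > 0" using sgt rho_nonneg[OF j] by simp
  have stj: "t j < s" using sgt r0 by simp
  have s1': "s < 1" using s r01 by simp
  have sMT: "s * MT j \<le> Ca M + 1/2"
  proof -
    have "s * MT j = f s + rho j * MT j" unfolding f_def by (simp add: algebra_simps)
    then show ?thesis using s(3) rhoMT by simp
  qed
  have vs: "\<bar>v s\<bar> \<ge> ML j / 2"
  proof -
    have "\<bar>v s\<bar> \<ge> ML j - (s - rho j) * (ML j * MT j)" using lower_after[OF j s(1)] s1' by simp
    also have "(s - rho j) * (ML j * MT j) = ML j * f s" unfolding f_def by (simp add: algebra_simps)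
    finally show ?thesis using s(3) by simp
  qed
  have eta2_s: "\<bar>w (ln s)\<bar> \<ge> eta2 M \<gamma>"
  proof -
    have "(s - rho j) powr bet \<le> s powr bet" using sgt rho_nonneg[OF j] beta_pos by (intro powr_mono2) auto
    have MTb: "MT j powr bet = ML j"
    proof -
      have "MT j powr bet = ML j powr (q/2 * bet)" unfolding MT_eq by (simp add: powr_powr)
      also have "q/2 * bet = 1" using beta_q by (simp add: algebra_simps)
      finally show ?thesis using MLp by simp
    qed
    have fsb: "(f s) powr bet = (s - rho j) powr bet * ML j"
      unfolding f_def using sgt MTp MTb by (simp add: powr_mult)
    have "\<bar>w (ln s)\<bar> = s powr bet * \<bar>v s\<bar>" using s0 by (simp add: w_ln abs_mult)
    also have "\<dots> \<ge> (s - rho j) powr bet * (ML j / 2)"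
      using \<open>(s - rho j) powr bet \<le> s powr bet\<close> vs MLp by (intro mult_mono) auto
    finally have "\<bar>w (ln s)\<bar> \<ge> (1/2) powr bet / 2" using fsb s(3) by simp
    moreover have "(1/2::real) powr (2 / q1 M) \<le> (1/2) powr bet"
    proof (rule powr_mono')
      show "bet \<le> 2 / q1 M" unfolding bet_def using q_ge q1_pos by (intro divide_left_mono) auto
    qed auto
    moreover have "eta2 M \<gamma> \<le> (1/2) powr (2 / q1 M) / 2" by (simp add: eta2_def)
    ultimately show ?thesis by linarith
  qed
  have eta2_r: "\<bar>w (ln r)\<bar> \<ge> eta2 M \<gamma>"
  proof -
    have A: "\<bar>w (ln r)\<bar> powr q \<ge> \<gamma>" using absw_ln_powr[OF r01(1)] g by simp
    have "\<bar>w (ln r)\<bar> = (\<bar>w (ln r)\<bar> powr q) powr (1/q)" using q_pos by (simp add: powr_powr)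
    also have "\<dots> \<ge> \<gamma> powr (1/q)" using A \<gamma> q_pos by (intro powr_mono2) auto
    finally have "\<bar>w (ln r)\<bar> \<ge> \<gamma> powr (1/q)" .
    moreover have "\<gamma> powr (1 / q1 M) \<le> \<gamma> powr (1/q)"
    proof (rule powr_mono')
      show "1/q \<le> 1 / q1 M" using q_ge q1_pos by (intro divide_left_mono) auto
    qed (use \<gamma> in auto)
    moreover have "eta2 M \<gamma> \<le> \<gamma> powr (1 / q1 M)" by (simp add: eta2_def)
    ultimately show ?thesis by linarith
  qed
  have lsr: "ln s \<le> ln r" using s s0 by simp
  have lr0: "ln r < 0" using r01 by simp
  have sub: "{ln s..ln r} \<subseteq> {..<0}" using lr0 by auto
  have eta_pos: "eta2 M \<gamma> > 0" using eta2_pos[OF \<gamma>(1)] .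
  have c0p: "c0L M \<gamma> > 0" using eta_pos Bl_pos q1_pos by (simp add: c0L_def)
  have c0le: "c0L M \<gamma> \<le> eta2 M \<gamma> * bb * q / 4"
  proof -
    have "eta2 M \<gamma> * Bl M * q1 M \<le> eta2 M \<gamma> * bb * q"
      using eta_pos b_ge Bl_pos q_ge q1_pos by (intro mult_mono) auto
    then show ?thesis by (simp add: c0L_def divide_right_mono)
  qed
  have hmp: "hmL M \<gamma> > 0" using eta_pos Bl_pos q1_pos QM_pos by (simp add: hmL_def)
  have hmle: "hmL M \<gamma> \<le> (eta2 M \<gamma>)\<^sup>2 * bb * q / (2*(q+2))"
  proof -
    have "(eta2 M \<gamma>)\<^sup>2 * Bl M * q1 M \<le> (eta2 M \<gamma>)\<^sup>2 * bb * q"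
      using eta_pos b_ge Bl_pos q_ge q1_pos by (intro mult_mono) auto
    moreover have "2*(q+2) \<le> 2*(QM M + 2)" using q_lt by simp
    ultimately show ?thesis unfolding hmL_def using q_pos eta_pos b_pos
      by (intro frac_le) (auto intro!: mult_nonneg_nonneg)
  qed
  have dur: "ln r - ln s \<le> Tdur M \<gamma>"
    if E: "efo aa bb q y y' {..<0}" and ab: "\<And>\<tau>. \<bar>y \<tau>\<bar> = \<bar>w \<tau>\<bar> \<and> \<bar>y' \<tau>\<bar> = \<bar>w' \<tau>\<bar>"
      and pos: "\<And>x. t j < x \<Longrightarrow> x < t (Suc j) \<Longrightarrow> y (ln x) > 0" for y y'
  proof -
    interpret Y: efo aa bb q y y' "{..<0}" by (rule E)
    have ypos: "y \<tau> > 0" if "ln s \<le> \<tau>" "\<tau> \<le> ln r" for \<tau>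
    proof -
      have "s \<le> exp \<tau>" "exp \<tau> \<le> r" using that s0 r01 by (metis exp_le_cancel_iff exp_ln)+
      then have "y (ln (exp \<tau>)) > 0" using pos[of "exp \<tau>"] stj r by linarith
      then show ?thesis by simp
    qed
    have ys: "y (ln s) \<ge> eta2 M \<gamma>" using ab[of "ln s"] ypos[of "ln s"] lsr eta2_s by auto
    have yr: "y (ln r) \<ge> eta2 M \<gamma>" using ab[of "ln r"] ypos[of "ln r"] lsr eta2_r by auto
    have yeta: "y \<tau> \<ge> eta2 M \<gamma>" if "\<tau> \<in> {ln s..ln r}" for \<tau>
    proof -
      have "y \<tau> \<ge> min (y (ln s)) (y (ln r))"
      proof (rule Y.qc[OF sub])
        show "\<And>t. ln s < t \<Longrightarrow> t < ln r \<Longrightarrow> y t > 0" using ypos by auto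
      qed (use that in auto)
      then show ?thesis using ys yr by linarith
    qed
    have yS: "\<bar>y' \<tau>\<bar> \<le> S0 M" if "\<tau> \<in> {ln s..ln r}" for \<tau>
      using ab[of \<tau>] w'_le_S0[OF s1 s2, of \<tau>] that lr0 by auto
    have "ln r - ln s \<le> 2*(YL0 M / sqrt (hmL M \<gamma>) + 1 + 4 * S0 M / c0L M \<gamma>)"
      by (rule Y.duration[OF lsr sub eta_pos yeta yS c0p c0le s3 hmp hmle YL_bound])
    then show ?thesis by (simp add: Tdur_def)
  qed
  have D: "ln r - ln s \<le> Tdur M \<gamma>"
  proof (cases "\<forall>x. t j < x \<and> x < t (Suc j) \<longrightarrow> v x > 0")
    case True
    show ?thesis
    proof (rule dur[OF efo_w])
      fix x assume "t j < x" "x < t (Suc j)"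
      then have "v x > 0" "x > 0" using True t_range[of j] by auto
      then show "w (ln x) > 0" by (simp add: w_ln)
    qed auto
  next
    case False
    then have neg: "\<forall>x. t j < x \<and> x < t (Suc j) \<longrightarrow> v x < 0" using sign_const[OF j] by blast
    interpret P: efo aa bb q w w' "{..<0}" by (rule efo_w)
    show ?thesis
    proof (rule dur[OF P.neg])
      fix x assume "t j < x" "x < t (Suc j)"
      then have "v x < 0" "x > 0" using neg t_range[of j] by auto
      then show "- w (ln x) > 0" by (simp add: w_ln mult_pos_neg)
    qed auto
  qed
  have "r \<le> s * exp (Tdur M \<gamma>)"
  proof -
    have "ln r \<le> ln s + Tdur M \<gamma>" using D by simp
    then have "exp (ln r) \<le> exp (ln s + Tdur M \<gamma>)" by simp
    then show ?thesis using r01 s0 by (simp add: exp_add)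
  qed
  then have "r * MT j \<le> s * exp (Tdur M \<gamma>) * MT j" using MTp by (intro mult_right_mono) auto
  also have "\<dots> = (s * MT j) * exp (Tdur M \<gamma>)" by simp
  also have "\<dots> \<le> (Ca M + 1/2) * exp (Tdur M \<gamma>)" using sMT by (intro mult_right_mono) auto
  also have "\<dots> < Kreq M \<gamma>" by (simp add: Kreq_def)
  finally show False using K big by linarith
qed

end

context rsol begin

lemma per_p:
  assumes s1: "(-aa) * m * c2M M \<le> 1/2" and s2: "(-aa) * m * (Bh M + 1) * X0sq M \<le> 1"
    and s3: "(-aa) * S0 M \<le> c0L M \<gamma> / 2" and \<gamma>: "0 < \<gamma>" "\<gamma> \<le> 1"
    and K: "K \<ge> Kreq M \<gamma>" and K1: "K \<ge> 1" and i: "i \<in> {1..m}" and r: "r \<in> Gset p v m K i"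
  shows "p * r\<^sup>2 * \<bar>v r\<bar> powr (p - 1) \<le> max (p / K\<^sup>2) (p * \<gamma>)"
proof -
  have p0: "p > 0" using q_pos by simp
  have r01: "0 < r" "r < 1" using r by (auto simp: Gset_def split: if_splits)
  have rhs0: "max (p / K\<^sup>2) (p * \<gamma>) \<ge> 0" using p0 \<gamma> by (simp add: le_max_iff_disj)
  show ?thesis
  proof (cases "v r = 0")
    case True then show ?thesis using rhs0 by simp
  next
    case False
    obtain j where j: "j < m" "t j \<le> r" "r \<le> t (Suc j)" using locate[OF r01] by blast
    have jr: "t j < r" "r < t (Suc j)" using closed_cases[OF j r01(1)] False by auto
    define g where "g = r\<^sup>2 * \<bar>v r\<bar> powr q"
    have "g \<le> 1/K\<^sup>2 \<or> g < \<gamma>"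
    proof (cases "i < m")
      case True
      have G: "K / MT (i-1) < r" "r < 1 / (K * MT i)" using r True by (auto simp: Gset_def)
      have i1: "i - 1 < m" "1 \<le> i" using i by auto
      have MTi: "MT i > 0" using MT_pos[OF True] .
      have MTi1: "MT (i-1) > 0" using MT_pos[OF i1(1)] .
      have rMTi: "r * MT i < 1/K"
      proof -
        have "r * (K * MT i) < 1" using G(2) MTi K1 by (simp add: field_simps)
        then show ?thesis using K1 by (simp add: field_simps)
      qed
      consider "j < i" | "j = i" | "i < j" by linarith
      then show ?thesis
      proof cases
        case 1
        have "MT (i-1) \<le> MT j" using MT_mono[of j "i-1"] 1 i1 by auto
        moreover have "K < r * MT (i-1)" using G(1) MTi1 by (simp add: field_simps)
        moreover have "r * MT (i-1) \<le> r * MT j" using \<open>MT (i-1) \<le> MT j\<close> r01 by (intro mult_left_mono) auto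
        ultimately have "r * MT j > K" by linarith
        then show ?thesis using coreB[OF s1 s2 s3 \<gamma> j(1) jr K] unfolding g_def by simp
      next
        case 2
        have "\<bar>v r\<bar> \<le> ML i" using rho(2)[OF True, of r] j 2 Mloc_eq[OF True] by auto
        then have "\<bar>v r\<bar> powr q \<le> ML i powr q" using q_pos by (intro powr_mono2) auto
        also have "ML i powr q = (MT i)\<^sup>2"
        proof -
          have "(MT i)\<^sup>2 = (ML i powr (q/2)) powr 2" unfolding MT_eq using Mloc_pos[OF True] by (simp add: powr_numeral)
          also have "\<dots> = ML i powr (q/2*2)" by (simp only: powr_powr)
          also have "q/2*2 = q" by simp
          finally show ?thesis by (rule sym)
        qed
        finally have "g \<le> r\<^sup>2 * (MT i)\<^sup>2" unfolding g_def by (simp add: mult_left_mono)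
        also have "\<dots> = (r * MT i)\<^sup>2" by (simp add: power_mult_distrib)
        also have "\<dots> \<le> (1/K)\<^sup>2" using rMTi r01 MTi by (intro power_mono) auto
        finally show ?thesis by (simp add: power_divide)
      next
        case 3
        have "t (Suc i) \<le> t j" using t_le[of "Suc i" j] 3 by simp
        then have "t (Suc i) < r" using jr by simp
        moreover have "t (Suc i) * MT i \<ge> 1" using F2[of i] 3 j by simp
        moreover have "t (Suc i) * MT i < r * MT i" using \<open>t (Suc i) < r\<close> MTi by (rule mult_strict_right_mono)
        ultimately have "r * MT i > 1" by linarith
        moreover have "1/K \<le> 1" using K1 by simp
        ultimately show ?thesis using rMTi by simp
      qed
    next
      case False
      then have im: "i = m" using i by simp
      have G: "K / MT (m-1) < r" using r im by (auto simp: Gset_def)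
      have m1': "m - 1 < m" using m1 by simp
      have MTm: "MT (m-1) > 0" using MT_pos[OF m1'] .
      have "MT (m-1) \<le> MT j" using MT_mono[of j "m-1"] j by auto
      moreover have "K < r * MT (m-1)" using G MTm by (simp add: field_simps)
      moreover have "r * MT (m-1) \<le> r * MT j" using \<open>MT (m-1) \<le> MT j\<close> r01 by (intro mult_left_mono) auto
      ultimately have "r * MT j > K" by linarith
      then show ?thesis using coreB[OF s1 s2 s3 \<gamma> j(1) jr K] unfolding g_def by simp
    qed
    then show ?thesis
    proof
      assume "g \<le> 1/K\<^sup>2"
      then have "p * g \<le> p * (1/K\<^sup>2)" using p0 by (intro mult_left_mono) auto
      then show ?thesis unfolding g_def by (simp add: mult.assoc)
    next
      assume "g < \<gamma>"
      then have "p * g \<le> p * \<gamma>" using p0 by (intro mult_left_mono) auto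
      then show ?thesis unfolding g_def by (simp add: mult.assoc)
    qed
  qed
qed

end

theorem lemma2p14:
  fixes M :: real and m :: nat and v :: "real \<Rightarrow> real \<Rightarrow> real"
  assumes "M > 2" and "m \<ge> 1"
    and "\<And>p. 1 < p \<Longrightarrow> p < pM M \<Longrightarrow>
           radial_sol M p (v p) \<and> nodal_zones (v p) m \<and> v p 0 > 0"
  shows "\<forall>\<epsilon>>0. \<exists>Kb>0. \<exists>pb<pM M. \<forall>K>Kb. \<forall>p. 1 < p \<and> pb < p \<and> p < pM M \<longrightarrow>
           (\<exists>c<\<epsilon>. \<forall>r\<in>(\<Union>i\<in>{1..m}. Gset p (v p) m K i).
              p * r\<^sup>2 * \<bar>v p r\<bar> powr (p - 1) \<le> c)"
proof (intro allI impI)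
  fix \<epsilon> :: real assume eps: "\<epsilon> > 0"
  note M2 = assms(1) and m1 = assms(2) and hyp = assms(3)
  have pMe: "pM M = 1 + QM M" using M2 by (simp add: pM_def QM_def field_simps)
  have QMp: "QM M > 0" using M2 by (simp add: QM_def)
  have pMp: "pM M > 0" using pMe QMp by simp
  define \<gamma> where "\<gamma> = min (1/2) (\<epsilon> / (2 * pM M))"
  have \<gamma>: "0 < \<gamma>" "\<gamma> \<le> 1" using eps pMp by (auto simp: \<gamma>_def)
  have \<gamma>e: "pM M * \<gamma> \<le> \<epsilon>/2"
  proof -
    have "\<gamma> \<le> \<epsilon> / (2 * pM M)" by (simp add: \<gamma>_def)
    then have "pM M * \<gamma> \<le> pM M * (\<epsilon> / (2 * pM M))" using pMp by (intro mult_left_mono) auto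
    then show ?thesis using pMp by simp
  qed
  have Bhp: "Bh M > 0" using M2 by (simp add: Bh_def)
  have Blp: "Bl M > 0" using M2 by (simp add: Bl_def)
  have q1p: "q1 M > 0" using M2 by (simp add: q1_def)
  have c2p: "c2M M > 0" unfolding c2M_def using Bhp QMp by (simp add: add_pos_nonneg)
  have X0: "X0sq M \<ge> 1" unfolding X0sq_def using q1p by (intro ge_one_powr_ge_zero) auto
  have S0p: "S0 M > 0" unfolding S0_def using Bhp X0 QMp by (intro real_sqrt_gt_zero add_pos_nonneg) auto
  have eta_pos: "eta2 M \<gamma> > 0" using \<gamma> by (simp add: eta2_def)
  have c0p: "c0L M \<gamma> > 0" using eta_pos Blp q1p by (simp add: c0L_def)
  define \<alpha> where "\<alpha> = min (min (1/(2*m*c2M M)) (1/(m*(Bh M+1)*X0sq M))) (c0L M \<gamma>/(2*S0 M))"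
  have mp: "real m > 0" using m1 by simp
  have \<alpha>p: "\<alpha> > 0" unfolding \<alpha>_def using mp c2p Bhp X0 S0p c0p by auto
  define pb where "pb = 1 + max (q1 M) (4/(M-2+\<alpha>))"
  have pb: "pb < pM M"
  proof -
    have "q1 M < QM M" using M2 by (simp add: q1_def QM_def field_simps)
    moreover have "4/(M-2+\<alpha>) < QM M" unfolding QM_def using M2 \<alpha>p by (intro divide_strict_left_mono) auto
    ultimately show ?thesis unfolding pb_def pMe by simp
  qed
  define Kb where "Kb = max (Kreq M \<gamma>) (max 1 (2 * pM M / \<epsilon>))"
  have Kbp: "Kb > 0" unfolding Kb_def by simp
  show "\<exists>Kb>0. \<exists>pb<pM M. \<forall>K>Kb. \<forall>p. 1 < p \<and> pb < p \<and> p < pM M \<longrightarrow>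
           (\<exists>c<\<epsilon>. \<forall>r\<in>(\<Union>i\<in>{1..m}. Gset p (v p) m K i).
              p * r\<^sup>2 * \<bar>v p r\<bar> powr (p - 1) \<le> c)"
  proof (rule exI[of _ Kb], intro conjI Kbp, rule exI[of _ pb], intro conjI pb allI impI)
    fix K p assume K: "K > Kb" and p: "1 < p \<and> pb < p \<and> p < pM M"
    have h: "radial_sol M p (v p) \<and> nodal_zones (v p) m \<and> v p 0 > 0" using hyp p by auto
    have "pb \<ge> 1 + q1 M" unfolding pb_def by simp
    then have pq: "p - 1 \<ge> q1 M" using p by linarith
    interpret R: rsol M p m "v p" by unfold_locales (use M2 m1 pq p h in auto)
    have aa_lt: "- R.aa < \<alpha>"
    proof -
      have "pb \<ge> 1 + 4/(M-2+\<alpha>)" unfolding pb_def by simp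
      then have pq2: "p - 1 > 4/(M-2+\<alpha>)" using p by linarith
      have pos: "M - 2 + \<alpha> > 0" using M2 \<alpha>p by simp
      have "4 < (M-2+\<alpha>) * (p-1)" using pq2 pos by (simp add: field_simps)
      then have "4/(p-1) < M-2+\<alpha>" using p by (simp add: field_simps)
      then show ?thesis by (simp add: R.aa_def R.bet_def)
    qed
    have aa_pos: "- R.aa > 0" using R.a_neg by simp
    have s1: "(- R.aa) * m * c2M M \<le> 1/2"
    proof -
      have "(- R.aa) * (m * c2M M) \<le> \<alpha> * (m * c2M M)" using aa_lt mp c2p by (intro mult_right_mono) auto
      also have "\<dots> \<le> (1/(2*m*c2M M)) * (m * c2M M)" unfolding \<alpha>_def using mp c2p by (intro mult_right_mono) auto
      also have "\<dots> = 1/2" using mp c2p by simp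
      finally show ?thesis by (simp add: mult.assoc)
    qed
    have s2: "(- R.aa) * m * (Bh M + 1) * X0sq M \<le> 1"
    proof -
      have pz: "m * (Bh M + 1) * X0sq M > 0" using mp Bhp X0 by simp
      have "(- R.aa) * (m * (Bh M + 1) * X0sq M) \<le> \<alpha> * (m * (Bh M + 1) * X0sq M)" using aa_lt pz by (intro mult_right_mono) auto
      also have "\<dots> \<le> (1/(m*(Bh M+1)*X0sq M)) * (m * (Bh M + 1) * X0sq M)" unfolding \<alpha>_def using pz by (intro mult_right_mono) auto
      also have "\<dots> = 1" using pz m1 Bhp X0 by simp
      finally show ?thesis by (simp add: mult.assoc)
    qed
    have s3: "(- R.aa) * S0 M \<le> c0L M \<gamma> / 2"
    proof -
      have "(- R.aa) * S0 M \<le> \<alpha> * S0 M" using aa_lt S0p by (intro mult_right_mono) auto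
      also have "\<dots> \<le> (c0L M \<gamma>/(2*S0 M)) * S0 M" unfolding \<alpha>_def using S0p by (intro mult_right_mono) auto
      also have "\<dots> = c0L M \<gamma> / 2" using S0p by simp
      finally show ?thesis .
    qed
    have KK: "K \<ge> Kreq M \<gamma>" "K \<ge> 1" "K > 2 * pM M / \<epsilon>" using K by (auto simp: Kb_def)
    define c where "c = max (p / K\<^sup>2) (p * \<gamma>)"
    show "\<exists>c<\<epsilon>. \<forall>r\<in>(\<Union>i\<in>{1..m}. Gset p (v p) m K i). p * r\<^sup>2 * \<bar>v p r\<bar> powr (p - 1) \<le> c"
    proof -
      have "p / K\<^sup>2 < \<epsilon>"
      proof -
        have Kp: "K > 0" using KK by simp
        have "K \<le> K\<^sup>2" using KK by (simp add: power2_eq_square)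
        then have "2 * pM M / \<epsilon> < K\<^sup>2" using KK by linarith
        then have "2 * pM M < \<epsilon> * K\<^sup>2" using eps by (simp add: field_simps)
        moreover have "p < 2 * pM M" using p pMp by simp
        ultimately have "p < \<epsilon> * K\<^sup>2" by linarith
        then show ?thesis using Kp by (simp add: field_simps)
      qed
      moreover have "p * \<gamma> < \<epsilon>"
      proof -
        have "p * \<gamma> \<le> pM M * \<gamma>" using p \<gamma> by (intro mult_right_mono) auto
        then show ?thesis using \<gamma>e eps by linarith
      qed
      ultimately have cl: "c < \<epsilon>" by (simp add: c_def)
      have "\<forall>r\<in>(\<Union>i\<in>{1..m}. Gset p (v p) m K i). p * r\<^sup>2 * \<bar>v p r\<bar> powr (p - 1) \<le> c"
      proof
        fix r assume "r \<in> (\<Union>i\<in>{1..m}. Gset p (v p) m K i)"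
        then obtain i where i: "i \<in> {1..m}" "r \<in> Gset p (v p) m K i" by blast
        show "p * r\<^sup>2 * \<bar>v p r\<bar> powr (p - 1) \<le> c"
          unfolding c_def by (rule R.per_p[OF s1 s2 s3 \<gamma> KK(1) KK(2) i])
      qed
      then show ?thesis using cl by blast
    qed
  qed
qed

end
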